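(* Let $0<r<q-1$, $r=r_0+r_1p+\dots+r_{f-1}p^{f-1}$ with $0\le r_j\le p-1$. Let $n\ge1$, $0\le i_j\le q-1$ for $0\le j\le n-1$, and write $i_{n-1}=i_{n-1,0}+i_{n-1,1}p+\dots+i_{n-1,f-1}p^{f-1}$ with $0\le i_{n-1,j}\le p-1$. Then: (1) $\sum_{\mu_0\in\mathbb F_q}\cdots\sum_{\mu_{n-1}\in\mathbb F_q}\mu_0^{i_0}\cdots\mu_{n-1}^{i_{n-1}}\left[\begin{pmatrix}\varpi^n&\mu\\0&1\end{pmatrix},1\right]\in\mathrm{Ker}\,T_{1,2}$ if and only if either $0\le i_{n-1}\le q-2-r$, or $i_{n-1}>q-1-r$ and $i_{n-1,j}<p-1-r_j$ for some $0\le j\le f-2$; (2) $\sum_{\mu_0}\cdots\sum_{\mu_{n-1}}\mu_0^{i_0}\cdots\mu_{n-1}^{i_{n-1}}\left[\begin{pmatrix}\varpi^{n-1}&[\mu]_{n-1}\\0&1\end{pmatrix}\begin{pmatrix}1&[\mu_{n-1}]\\0&1\end{pmatrix}w,1\right]\in\mathrm{Ker}\,T_{-1,0}$ if and only if either $0\le i_{n-1}\le r-1$, or $i_{n-1}>r$ and $i_{n-1,j}<r_j$ for some $0\le j\le f-2$. Here $\mu=[\mu_0]+[\mu_1]\varpi+\dots+[\mu_{n-1}]\varpi^{n-1}$.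
   Context: $F$ is a finite extension of $\mathbb Q_p$ with ring of integers $\mathcal O$, uniformizer $\varpi$, residue field $\mathbb F_q$, $q=p^f$; $[x]$ is the multiplicative representative of $x\in\mathbb F_q$; $\bar a$ the reduction of $a\in\mathcal O$; convention $0^0=1$. $G=\mathrm{GL}_2(F)$, $K=\mathrm{GL}_2(\mathcal O)$, $Z$ the centre, $I$ the Iwahori subgroup of $K$ (lower-left entry in $\varpi\mathcal O$). $\chi_r:IZ\to\overline{\mathbb F}_p^\times$, $\begin{pmatrix} a&b\\ \varpi c&d\end{pmatrix}\mapsto\bar d^{\,r}$, $\mathrm{diag}(\varpi,\varpi)\mapsto1$; $\mathrm{ind}_{IZ}^G\chi_r$ is the compact induction and $[g,1]$ the element supported on $IZg^{-1}$ with value $1$ at $g^{-1}$. $\beta=\begin{pmatrix}0&1\\ \varpi&0\end{pmatrix}$, $w=\begin{pmatrix}0&1\\1&0\end{pmatrix}$, $I_1=\{[\lambda]:\lambda\in\mathbb F_q\}$; $T_{-1,0},T_{1,2}$ are the $G$-endomorphisms with $T_{-1,0}[g,1]=\sum_{\lambda\in I_1}[g\begin{pmatrix}\varpi&\lambda\\0&1\end{pmatrix},1]$ and $T_{1,2}[g,1]=\sum_{\lambda\in I_1}[g\beta\begin{pmatrix}1&\lambda\\0&1\end{pmatrix}w,1]$. For $\mu$ as in the claim, $[\mu]_{n-1}=\sum_{i<n-1}[\mu_i]\varpi^i$. *)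

theory Defs
  imports Main "HOL-Computational_Algebra.Primes" "HOL-Library.FuncSet" "HOL-Library.Cardinality"
begin

text \<open>F is modelled by a type 'a of characteristic 0, with a subset \<O> (ring of integers),
  a uniformizer pi, and a reduction map red : \<O> -> 'k onto the finite residue field 'k
  of cardinality q = p^f.  A complete
  discretely valued field of characteristic 0 with finite residue field is exactly a
  finite extension of Q_p.\<close>

definition padic_setup :: "'a::field_char_0 set \<Rightarrow> 'a \<Rightarrow> ('a \<Rightarrow> 'k::{field,finite}) \<Rightarrow> nat \<Rightarrow> nat \<Rightarrow> bool" where
  "padic_setup \<O> pi red p f \<longleftrightarrow>
     prime p \<and> f \<ge> 1 \<and> CARD('k) = p ^ f \<and>
     \<comment> \<open>\<O> is a subring\<close>
     0 \<in> \<O> \<and> 1 \<in> \<O> \<and> (\<forall>x\<in>\<O>. \<forall>y\<in>\<O>. x + y \<in> \<O> \<and> x * y \<in> \<O> \<and> - x \<in> \<O>) \<and>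
     \<comment> \<open>pi is a uniformizer of the discrete valuation ring \<O>\<close>
     pi \<in> \<O> \<and> pi \<noteq> 0 \<and> inverse pi \<notin> \<O> \<and>
     (\<forall>x. x \<noteq> 0 \<longrightarrow> (\<exists>m::int. \<exists>u\<in>\<O>. inverse u \<in> \<O> \<and> x = pi powi m * u)) \<and>
     \<comment> \<open>red is a surjective ring homomorphism \<O> -> 'k with kernel pi \<O>\<close>
     (\<forall>x\<in>\<O>. \<forall>y\<in>\<O>. red (x + y) = red x + red y \<and> red (x * y) = red x * red y) \<and>
     red 1 = 1 \<and> red ` \<O> = UNIV \<and>
     (\<forall>x\<in>\<O>. red x = 0 \<longleftrightarrow> (\<exists>y\<in>\<O>. x = pi * y)) \<and>
     \<comment> \<open>completeness for the pi-adic topology\<close>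
     (\<forall>s::nat \<Rightarrow> 'a. (\<forall>k. s k \<in> \<O> \<and> (\<exists>y\<in>\<O>. s (Suc k) - s k = pi ^ k * y)) \<longrightarrow>
        (\<exists>l\<in>\<O>. \<forall>k. \<exists>y\<in>\<O>. l - s k = pi ^ k * y))"

definition teich :: "'a::field set \<Rightarrow> ('a \<Rightarrow> 'k::{field,finite}) \<Rightarrow> 'k \<Rightarrow> 'a" where
  "teich \<O> red x = (THE y. y \<in> \<O> \<and> red y = x \<and> y ^ CARD('k) = y)"

datatype 'a mat2 = M2 'a 'a 'a 'a  \<comment> \<open>M2 a b c d = (a b; c d)\<close>

fun mmul :: "'a::comm_ring_1 mat2 \<Rightarrow> 'a mat2 \<Rightarrow> 'a mat2" (infixl "\<cdot>" 70) where
  "M2 a b c d \<cdot> M2 a' b' c' d' = M2 (a*a' + b*c') (a*b' + b*d') (c*a' + d*c') (c*b' + d*d')"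

fun smul :: "'a::comm_ring_1 \<Rightarrow> 'a mat2 \<Rightarrow> 'a mat2" where
  "smul z (M2 a b c d) = M2 (z*a) (z*b) (z*c) (z*d)"

fun det2 :: "'a::comm_ring_1 mat2 \<Rightarrow> 'a" where
  "det2 (M2 a b c d) = a*d - b*c"

fun dent :: "'a mat2 \<Rightarrow> 'a" where "dent (M2 a b c d) = d"

definition Kgrp :: "'a::field set \<Rightarrow> 'a mat2 set" where
  "Kgrp \<O> = {M2 a b c d | a b c d. a \<in> \<O> \<and> b \<in> \<O> \<and> c \<in> \<O> \<and> d \<in> \<O> \<and>
                 det2 (M2 a b c d) \<noteq> 0 \<and> inverse (det2 (M2 a b c d)) \<in> \<O>}"

definition Iwa :: "'a::field set \<Rightarrow> 'a \<Rightarrow> 'a mat2 set" where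
  "Iwa \<O> pi = {M2 a b c d | a b c d. M2 a b c d \<in> Kgrp \<O> \<and> (\<exists>y\<in>\<O>. c = pi * y)}"

definition IZ :: "'a::field set \<Rightarrow> 'a \<Rightarrow> 'a mat2 set" where
  "IZ \<O> pi = {smul z k | z k. z \<noteq> 0 \<and> k \<in> Iwa \<O> pi}"

text \<open>chi_r on IZ: (a b; pi c d) |-> (red d)^r on I and diag(pi,pi) |-> 1.  Since
  Z = pi^Z . \<O>^x and \<O>^x . I = I, every h in IZ is pi^m k with k in I, uniquely.\<close>
definition chi :: "'a::field set \<Rightarrow> 'a \<Rightarrow> ('a \<Rightarrow> 'k::field) \<Rightarrow> nat \<Rightarrow> 'a mat2 \<Rightarrow> 'k" where
  "chi \<O> pi red r h = (THE v. \<exists>m::int. \<exists>k \<in> Iwa \<O> pi. h = smul (pi powi m) k \<and> v = red (dent k) ^ r)"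

text \<open>The element [g,1] of ind_{IZ}^G chi_r, viewed as a function G -> F_q (values of
  chi_r lie in F_q, a subfield of the coefficient field): supported on IZ g^{-1},
  with [g,1](h g^{-1}) = chi_r(h).\<close>
definition bracket :: "'a::field set \<Rightarrow> 'a \<Rightarrow> ('a \<Rightarrow> 'k::field) \<Rightarrow> nat \<Rightarrow> 'a mat2 \<Rightarrow> 'a mat2 \<Rightarrow> 'k" where
  "bracket \<O> pi red r g = (\<lambda>x. if x \<cdot> g \<in> IZ \<O> pi then chi \<O> pi red r (x \<cdot> g) else 0)"

definition beta :: "'a \<Rightarrow> 'a::comm_ring_1 mat2" where "beta pi = M2 0 1 pi 0"
definition wmat :: "'a::comm_ring_1 mat2" where "wmat = M2 0 1 1 0"

text \<open>Images under T_{1,2} and T_{-1,0} of a finite combination sum_s c_s [g_s,1]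
  (both operators are linear, given on the [g,1] by the formulas of the paper).\<close>
definition T12_comb :: "'a::field set \<Rightarrow> 'a \<Rightarrow> ('a \<Rightarrow> 'k::{field,finite}) \<Rightarrow> nat \<Rightarrow>
     'b set \<Rightarrow> ('b \<Rightarrow> 'k) \<Rightarrow> ('b \<Rightarrow> 'a mat2) \<Rightarrow> 'a mat2 \<Rightarrow> 'k" where
  "T12_comb \<O> pi red r S c g = (\<lambda>x. \<Sum>s\<in>S. c s *
      (\<Sum>t\<in>(UNIV::'k set). bracket \<O> pi red r (g s \<cdot> beta pi \<cdot> M2 1 (teich \<O> red t) 0 1 \<cdot> wmat) x))"

definition Tm10_comb :: "'a::field set \<Rightarrow> 'a \<Rightarrow> ('a \<Rightarrow> 'k::{field,finite}) \<Rightarrow> nat \<Rightarrow>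
     'b set \<Rightarrow> ('b \<Rightarrow> 'k) \<Rightarrow> ('b \<Rightarrow> 'a mat2) \<Rightarrow> 'a mat2 \<Rightarrow> 'k" where
  "Tm10_comb \<O> pi red r S c g = (\<lambda>x. \<Sum>s\<in>S. c s *
      (\<Sum>t\<in>(UNIV::'k set). bracket \<O> pi red r (g s \<cdot> M2 pi (teich \<O> red t) 0 1) x))"

definition teich_sum :: "'a::field set \<Rightarrow> 'a \<Rightarrow> ('a \<Rightarrow> 'k::{field,finite}) \<Rightarrow> nat \<Rightarrow> (nat \<Rightarrow> 'k) \<Rightarrow> 'a" where
  "teich_sum \<O> pi red m mu = (\<Sum>j<m. teich \<O> red (mu j) * pi ^ j)"

definition digit :: "nat \<Rightarrow> nat \<Rightarrow> nat \<Rightarrow> nat" where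
  "digit p i j = (i div p ^ j) mod p"

end

theory Submission
  imports Defs "HOL-Computational_Algebra.Polynomial"
begin


section \<open>Finite field facts\<close>

lemma ff_card_ge2: "CARD('k::{field,finite}) \<ge> 2"
proof -
  have "{0::'k, 1} \<subseteq> UNIV" by simp
  hence "card {0::'k,1} \<le> CARD('k)" by (intro card_mono) auto
  thus ?thesis by simp
qed

lemma ff_pow_card: "(x::'k::{field,finite}) ^ CARD('k) = x"
proof (cases "x = 0")
  case False
  have "x * (\<Prod>y\<in>UNIV-{0}. x * y) = x * x ^ (card (UNIV :: 'k set) - 1) * \<Prod>(UNIV-{0})"
    by (simp add: prod.distrib mult_ac)
  also have "x * x ^ (card (UNIV :: 'k set) - 1) = x ^ Suc (card (UNIV :: 'k set) - 1)"
    by (subst power_Suc) auto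
  also have "Suc (card (UNIV :: 'k set) - 1) = card (UNIV :: 'k set)"
    using finite_UNIV_card_ge_0[where ?'a = 'k] by simp
  also have "(\<Prod>y\<in>UNIV-{0}. x * y) = (\<Prod>y\<in>UNIV-{0}. y)"
    by (rule prod.reindex_bij_witness[of _ "\<lambda>y. y / x" "\<lambda>y. x * y"]) (use False in auto)
  finally show ?thesis
    by simp
qed (use finite_UNIV_card_ge_0[where ?'a = 'k] in auto)

lemma ff_pow_card1: "(x::'k::{field,finite}) \<noteq> 0 \<Longrightarrow> x ^ (CARD('k) - 1) = 1"
proof -
  assume x: "x \<noteq> 0"
  have "x * x ^ (CARD('k) - 1) = x ^ Suc (CARD('k) - 1)" by (simp only: power_Suc)
  also have "Suc (CARD('k) - 1) = CARD('k)" using ff_card_ge2[where 'k='k] by simp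
  finally have "x * x ^ (CARD('k) - 1) = x * 1" using ff_pow_card[of x] by simp
  thus ?thesis using x by simp
qed

lemma ff_of_nat_card: "of_nat CARD('k) = (0::'k::{field,finite})"
proof -
  have "(\<Sum>x\<in>UNIV. x + 1) = (\<Sum>x\<in>(UNIV::'k set). x)"
    by (rule sum.reindex_bij_witness[of _ "\<lambda>x. x - 1" "\<lambda>x. x + 1"]) auto
  thus ?thesis by (simp add: sum.distrib)
qed

lemma ff_char:
  assumes "CARD('k::{field,finite}) = p ^ f" "prime p" "f \<ge> 1"
  shows "of_nat n = (0::'k) \<longleftrightarrow> p dvd n"
proof -
  have "(of_nat p :: 'k) ^ f = 0" using ff_of_nat_card[where 'k='k] assms(1) by (simp add: of_nat_power)
  hence p0: "(of_nat p :: 'k) = 0" by simp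
  hence "CHAR('k) dvd p" by (simp add: of_nat_eq_0_iff_char_dvd)
  moreover have "CHAR('k) \<noteq> 1" by simp
  ultimately have "CHAR('k) = p" using assms(2) by (metis prime_nat_iff)
  thus ?thesis by (simp add: of_nat_eq_0_iff_char_dvd)
qed

lemma ff_powsum_pos:
  assumes "0 < a" "a < CARD('k::{field,finite}) - 1"
  shows "(\<Sum>x\<in>UNIV. x ^ a) = (0::'k)"
proof -
  have "\<exists>y::'k. y \<noteq> 0 \<and> y ^ a \<noteq> 1"
  proof (rule ccontr)
    assume "\<not> ?thesis"
    hence sub: "UNIV - {0} \<subseteq> {x::'k. poly (monom 1 a - 1) x = 0}"
      by (auto simp: poly_monom)
    have ne: "monom 1 a - 1 \<noteq> (0::'k poly)"
    proof
      assume "monom 1 a - 1 = (0::'k poly)"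
      hence "poly (monom 1 a - 1) 0 = (0::'k)" by simp
      thus False using assms(1) by (simp add: poly_monom zero_power)
    qed
    have "card (UNIV - {0::'k}) \<le> card {x::'k. poly (monom 1 a - 1) x = 0}"
      by (rule card_mono[OF _ sub]) simp
    also have "\<dots> \<le> degree (monom 1 a - 1 :: 'k poly)"
      by (rule card_poly_roots_bound[OF ne])
    also have "\<dots> \<le> a"
      by (rule degree_diff_le) (auto simp: degree_monom_le)
    finally show False using assms(2) by (simp add: card_Diff_singleton)
  qed
  then obtain y :: 'k where y: "y \<noteq> 0" "y ^ a \<noteq> 1" by blast
  have "(\<Sum>x\<in>UNIV. x ^ a) = (\<Sum>x\<in>UNIV. (y * x) ^ a)"
    by (rule sum.reindex_bij_witness[of _ "\<lambda>x. y * x" "\<lambda>x. x / y"]) (use y in auto)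
  also have "\<dots> = y ^ a * (\<Sum>x\<in>UNIV. x ^ a)"
    by (simp add: power_mult_distrib sum_distrib_left)
  finally have "(1 - y ^ a) * (\<Sum>x\<in>UNIV. x ^ a) = 0" by (simp add: algebra_simps)
  thus ?thesis using y by simp
qed

lemma ff_powsum:
  assumes "a < 2 * (CARD('k::{field,finite}) - 1)"
  shows "(\<Sum>x\<in>UNIV. x ^ a) = (if a = CARD('k) - 1 then -1 else (0::'k))"
proof -
  define q where "q = CARD('k)"
  have q2: "q \<ge> 2" unfolding q_def by (rule ff_card_ge2)
  consider "a = 0" | "0 < a \<and> a < q - 1" | "a = q - 1" | "q - 1 < a" by linarith
  thus ?thesis
  proof cases
    case 1 thus ?thesis using q2 ff_of_nat_card[where 'k='k] by (simp add: q_def)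
  next
    case 2 thus ?thesis using ff_powsum_pos[of a, where 'k='k] by (simp add: q_def)
  next
    case 3
    have "(\<Sum>x\<in>UNIV. x ^ a) = (0::'k) ^ a + (\<Sum>x\<in>UNIV - {0}. x ^ a)"
      by (simp add: sum.remove[of UNIV 0])
    also have "(\<Sum>x\<in>UNIV - {0}. (x::'k) ^ a) = (\<Sum>x\<in>UNIV - {0::'k}. 1)"
      by (intro sum.cong refl) (metis 3 q_def ff_pow_card1 DiffD2 singletonI)
    also have "\<dots> = of_nat (q - 1)" by (simp add: card_Diff_singleton q_def)
    also have "\<dots> = of_nat q - 1" using q2 by (simp add: of_nat_diff)
    finally show ?thesis using 3 q2 ff_of_nat_card[where 'k='k] by (simp add: q_def)
  next
    case 4
    have "(\<Sum>x\<in>UNIV. x ^ a) = (\<Sum>x\<in>UNIV. (x::'k) ^ (a - (q - 1)))"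
    proof (rule sum.cong)
      fix x :: 'k
      have e: "a = (a - (q - 1)) + (q - 1)" using 4 by simp
      show "x ^ a = x ^ (a - (q - 1))"
      proof (cases "x = 0")
        case True thus ?thesis using 4 by (simp add: zero_power)
      next
        case False
        have "x ^ a = x ^ (a - (q - 1)) * x ^ (q - 1)" by (subst e) (simp add: power_add)
        thus ?thesis using False ff_pow_card1[of x] by (simp add: q_def)
      qed
    qed simp
    also have "\<dots> = 0" using 4 assms by (intro ff_powsum_pos) (auto simp: q_def)
    finally show ?thesis using 4 by (simp add: q_def)
  qed
qed

lemma key_sum:
  fixes b c :: "'k::{field,finite}"
  assumes "0 < \<rho>" "\<rho> < CARD('k) - 1" "i \<le> CARD('k) - 1"
  shows "(\<Sum>m\<in>UNIV. m ^ i * (c + b * m) ^ \<rho>) =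
    (if CARD('k) - 1 - i \<le> \<rho> then - (of_nat (\<rho> choose (CARD('k) - 1 - i)) * b ^ (CARD('k) - 1 - i) * c ^ (\<rho> - (CARD('k) - 1 - i))) else 0)"
proof -
  define q where "q = CARD('k)"
  have "(\<Sum>m\<in>UNIV. m ^ i * (c + b * m) ^ \<rho>) =
      (\<Sum>m\<in>UNIV. \<Sum>k\<le>\<rho>. of_nat (\<rho> choose k) * b ^ k * c ^ (\<rho> - k) * m ^ (i + k))"
  proof (intro sum.cong refl)
    fix m :: 'k
    have "(c + b * m) ^ \<rho> = (\<Sum>k\<le>\<rho>. of_nat (\<rho> choose k) * (b * m) ^ k * c ^ (\<rho> - k))"
      using binomial_ring[of "b * m" c \<rho>] by (simp add: add.commute)
    thus "m ^ i * (c + b * m) ^ \<rho> = (\<Sum>k\<le>\<rho>. of_nat (\<rho> choose k) * b ^ k * c ^ (\<rho> - k) * m ^ (i + k))"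
      by (simp add: sum_distrib_left power_mult_distrib power_add mult_ac)
  qed
  also have "\<dots> = (\<Sum>k\<le>\<rho>. of_nat (\<rho> choose k) * b ^ k * c ^ (\<rho> - k) * (\<Sum>m\<in>UNIV. m ^ (i + k)))"
    by (subst sum.swap) (simp add: sum_distrib_left)
  also have "\<dots> = (\<Sum>k\<le>\<rho>. of_nat (\<rho> choose k) * b ^ k * c ^ (\<rho> - k) * (if i + k = q - 1 then -1 else 0))"
  proof (intro sum.cong refl)
    fix k assume "k \<in> {..\<rho>}"
    hence "i + k < 2 * (CARD('k) - 1)" using assms by auto
    thus "of_nat (\<rho> choose k) * b ^ k * c ^ (\<rho> - k) * (\<Sum>m\<in>UNIV. m ^ (i + k)) =
      of_nat (\<rho> choose k) * b ^ k * c ^ (\<rho> - k) * (if i + k = q - 1 then -1 else 0)"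
      by (simp only: ff_powsum q_def)
  qed
  also have "\<dots> = (\<Sum>k\<le>\<rho>. if k = q - 1 - i then - (of_nat (\<rho> choose k) * b ^ k * c ^ (\<rho> - k)) else 0)"
    by (intro sum.cong refl) (use assms in \<open>auto simp: q_def\<close>)
  also have "\<dots> = (if q - 1 - i \<le> \<rho> then - (of_nat (\<rho> choose (q - 1 - i)) * b ^ (q - 1 - i) * c ^ (\<rho> - (q - 1 - i))) else 0)"
    by (subst sum.delta) auto
  finally show ?thesis by (simp add: q_def)
qed

lemma kcond:
  assumes "CARD('k::{field,finite}) = p ^ f" "prime p" "f \<ge> 1"
    and "0 < \<rho>" "\<rho> < CARD('k) - 1" "i \<le> CARD('k) - 1"
  shows "(\<forall>m0 t0::'k. (\<Sum>m\<in>UNIV. m ^ i * (1 - t0 * (m - m0)) ^ \<rho>) = 0) \<longleftrightarrow>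
    (i < CARD('k) - 1 - \<rho> \<or> p dvd (\<rho> choose (CARD('k) - 1 - i)))"
proof -
  have eq: "(1 - t0 * (m - m0)) = (1 + t0 * m0) + (- t0) * m" for t0 m m0 :: 'k
    by (simp add: algebra_simps)
  have S: "(\<Sum>m\<in>UNIV. m ^ i * (1 - t0 * (m - m0)) ^ \<rho>) =
    (if CARD('k) - 1 - i \<le> \<rho> then - (of_nat (\<rho> choose (CARD('k) - 1 - i)) * (- t0) ^ (CARD('k) - 1 - i) * (1 + t0 * m0) ^ (\<rho> - (CARD('k) - 1 - i))) else 0)"
    for t0 m0 :: 'k
    unfolding eq by (rule key_sum) (use assms in auto)
  show ?thesis
  proof
    assume H: "\<forall>m0 t0::'k. (\<Sum>m\<in>UNIV. m ^ i * (1 - t0 * (m - m0)) ^ \<rho>) = 0"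
    show "i < CARD('k) - 1 - \<rho> \<or> p dvd (\<rho> choose (CARD('k) - 1 - i))"
    proof (cases "CARD('k) - 1 - i \<le> \<rho>")
      case True
      have "(\<Sum>m\<in>UNIV. m ^ i * (1 - (-1) * (m - 0)) ^ \<rho>) = (0::'k)" using H by blast
      hence "of_nat (\<rho> choose (CARD('k) - 1 - i)) = (0::'k)" using True by (simp only: S) simp
      thus ?thesis using ff_char[OF assms(1-3)] by blast
    qed (use assms in auto)
  next
    assume "i < CARD('k) - 1 - \<rho> \<or> p dvd (\<rho> choose (CARD('k) - 1 - i))"
    thus "\<forall>m0 t0::'k. (\<Sum>m\<in>UNIV. m ^ i * (1 - t0 * (m - m0)) ^ \<rho>) = 0"
    proof
      assume "i < CARD('k) - 1 - \<rho>"
      thus ?thesis by (auto simp: S)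
    next
      assume "p dvd (\<rho> choose (CARD('k) - 1 - i))"
      hence "of_nat (\<rho> choose (CARD('k) - 1 - i)) = (0::'k)" using ff_char[OF assms(1-3)] by blast
      thus ?thesis by (auto simp: S)
    qed
  qed
qed

section \<open>Lucas\<close>

lemma coeff_1X_pow: "coeff ([:1,1:] ^ n) i = (of_nat (n choose i) :: 'a::comm_semiring_1)"
proof (cases "i \<le> n")
  case True thus ?thesis using coeff_linear_poly_power[of i n 1 1] by simp
next
  case False
  have "degree ([:1::'a,1:] ^ n) \<le> n"
    using degree_power_le[of "[:1::'a,1:]" n] by simp
  hence "coeff ([:1::'a,1:] ^ n) i = 0" using False by (intro coeff_eq_0) auto
  thus ?thesis using False by (simp add: binomial_eq_0)
qed

lemma coeff_1Xp_pow:
  assumes "p > 0"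
  shows "coeff ((1 + monom 1 p) ^ m) k = (if p dvd k then of_nat (m choose (k div p)) else (0::'a::comm_semiring_1))"
proof (induction m arbitrary: k)
  case 0
  show ?case
  proof (cases "k = 0")
    case False
    hence "p dvd k \<Longrightarrow> k div p \<noteq> 0" using assms by (auto elim!: dvdE)
    thus ?thesis using False by (auto simp: binomial_eq_0)
  qed simp
next
  case (Suc m)
  have e: "(1 + monom 1 p) ^ Suc m = (1 + monom 1 p) ^ m + monom 1 p * (1 + monom 1 p :: 'a poly) ^ m"
    by (simp add: algebra_simps)
  have c: "coeff ((1 + monom 1 p) ^ Suc m) k = coeff ((1 + monom 1 p :: 'a poly) ^ m) k +
      (if k < p then 0 else coeff ((1 + monom 1 p :: 'a poly) ^ m) (k - p))"
    unfolding e by (simp add: coeff_monom_mult)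
  show ?case
  proof (cases "p dvd k")
    case False
    have "\<not> p dvd (k - p)" if "\<not> k < p"
    proof
      assume "p dvd (k - p)"
      hence "p dvd (k - p + p)" by simp
      thus False using that False by simp
    qed
    thus ?thesis using False unfolding c by (simp add: Suc.IH)
  next
    case True
    then obtain j where j: "k = p * j" by (elim dvdE)
    show ?thesis
    proof (cases j)
      case 0 thus ?thesis using j assms unfolding c by (simp add: Suc.IH)
    next
      case (Suc j')
      have k1: "\<not> k < p" using j Suc assms by simp
      have k2: "k - p = p * j'" using j Suc by (simp add: algebra_simps)
      show ?thesis unfolding c using k1 k2 j Suc assms by (simp add: Suc.IH add.commute)
    qed
  qed
qed

lemma lucas_step:
  fixes p :: nat
  assumes ch: "CHAR('a::field) = p" and pr: "prime p" and a0: "a0 < p"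
  shows "(of_nat ((p * a' + a0) choose b) :: 'a) = of_nat (a' choose (b div p)) * of_nat (a0 choose (b mod p))"
proof -
  have p0: "p > 0" using pr prime_gt_0_nat by blast
  define Q :: "'a poly" where "Q = [:1,1:]"
  have Q1: "Q = 1 + [:0,1:]" unfolding Q_def by (simp add: one_pCons)
  have "Q ^ p = 1 ^ p + [:0,1:] ^ p" unfolding Q1
    by (rule freshmans_dream) (use ch pr in auto)
  also have "[:0,1:] ^ p = (monom 1 p :: 'a poly)" by (simp add: monom_altdef)
  finally have Qp: "Q ^ p = 1 + monom 1 p" by simp
  have "Q ^ (p * a' + a0) = (1 + monom 1 p) ^ a' * Q ^ a0"
    by (simp add: power_add power_mult Qp)
  hence "coeff (Q ^ (p * a' + a0)) b = coeff ((1 + monom 1 p) ^ a' * Q ^ a0) b" by simp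
  also have "\<dots> = (\<Sum>j\<le>b. (if p dvd j then of_nat (a' choose (j div p)) else 0) * of_nat (a0 choose (b - j)))"
    by (simp add: coeff_mult coeff_1Xp_pow[OF p0] Q_def coeff_1X_pow)
  also have "\<dots> = (\<Sum>j\<in>{p * (b div p)}. (if p dvd j then of_nat (a' choose (j div p)) else 0) * of_nat (a0 choose (b - j)))"
  proof (rule sum.mono_neutral_right)
    show "{p * (b div p)} \<subseteq> {..b}" by (simp add: times_div_less_eq_dividend)
    show "\<forall>j\<in>{..b} - {p * (b div p)}. (if p dvd j then of_nat (a' choose (j div p)) else 0) * of_nat (a0 choose (b - j)) = (0::'a)"
    proof
      fix j assume j: "j \<in> {..b} - {p * (b div p)}"
      show "(if p dvd j then of_nat (a' choose (j div p)) else 0) * of_nat (a0 choose (b - j)) = (0::'a)"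
      proof (cases "p dvd j")
        case True
        then obtain j' where j': "j = p * j'" by (elim dvdE)
        have "p * j' \<le> b" using j j' by auto
        hence "j' \<le> b div p" using p0 by (simp add: less_eq_div_iff_mult_less_eq mult.commute)
        moreover have "j' \<noteq> b div p" using j j' by auto
        ultimately have "j' + 1 \<le> b div p" by simp
        hence "p * (j' + 1) \<le> p * (b div p)" by (rule mult_le_mono2)
        also have "\<dots> \<le> b" by (simp add: times_div_less_eq_dividend)
        finally have "a0 < b - j" using j' a0 by (simp add: algebra_simps)
        thus ?thesis by (simp add: binomial_eq_0)
      qed simp
    qed
  qed simp
  also have "\<dots> = of_nat (a' choose (b div p)) * of_nat (a0 choose (b mod p))"
    using p0 by (simp add: minus_mult_div_eq_mod)
  finally show ?thesis by (simp add: Q_def coeff_1X_pow)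
qed

lemma digit_0: "digit p x 0 = x mod p" by (simp add: digit_def)
lemma digit_Suc: "digit p x (Suc j) = digit p (x div p) j"
  by (simp add: digit_def div_mult2_eq mult.commute)

lemma lucas:
  fixes p :: nat
  assumes ch: "CHAR('a::field) = p" and pr: "prime p"
  shows "p dvd (a choose b) \<longleftrightarrow> (\<exists>j. digit p a j < digit p b j)"
proof (induction b arbitrary: a rule: less_induct)
  case (less b)
  have p1: "p > 1" using pr prime_gt_1_nat by blast
  show ?case
  proof (cases "b = 0")
    case True
    have "digit p 0 j = 0" for j by (simp add: digit_def)
    thus ?thesis using True p1 by auto
  next
    case False
    have lt: "b div p < b" using False p1 by simp
    have a_eq: "a = p * (a div p) + a mod p" by simp
    have "(of_nat (a choose b) :: 'a) = of_nat ((p * (a div p) + a mod p) choose b)"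
      using a_eq by simp
    also have "\<dots> = of_nat ((a div p) choose (b div p)) * of_nat ((a mod p) choose (b mod p))"
      by (rule lucas_step[OF ch pr]) (use p1 in simp)
    finally have eq: "(of_nat (a choose b) :: 'a) = of_nat ((a div p) choose (b div p)) * of_nat ((a mod p) choose (b mod p))" .
    have D: "\<And>n. p dvd n \<longleftrightarrow> (of_nat n :: 'a) = 0" using ch of_nat_eq_0_iff_char_dvd by metis
    have "p dvd (a choose b) \<longleftrightarrow> p dvd ((a div p) choose (b div p)) \<or> p dvd ((a mod p) choose (b mod p))"
      by (metis D mult_eq_0_iff eq)
    also have "p dvd ((a mod p) choose (b mod p)) \<longleftrightarrow> a mod p < b mod p"
    proof
      assume d: "p dvd ((a mod p) choose (b mod p))"
      show "a mod p < b mod p"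
      proof (rule ccontr)
        assume "\<not> a mod p < b mod p"
        hence "fact (b mod p) * fact (a mod p - b mod p) * (a mod p choose (b mod p)) = fact (a mod p)"
          by (intro binomial_fact_lemma) simp
        hence "p dvd fact (a mod p)" using d by (metis dvd_mult)
        hence "p \<le> a mod p" using prime_dvd_fact_iff[OF pr] by blast
        thus False using p1 mod_less_divisor[of p a] by linarith
      qed
    qed (simp add: binomial_eq_0)
    also have "p dvd ((a div p) choose (b div p)) \<longleftrightarrow> (\<exists>j. digit p (a div p) j < digit p (b div p) j)"
      by (rule less.IH[OF lt])
    also have "(\<exists>j. digit p (a div p) j < digit p (b div p) j) \<or> a mod p < b mod p \<longleftrightarrow> (\<exists>j. digit p a j < digit p b j)"
    proof
      assume "(\<exists>j. digit p (a div p) j < digit p (b div p) j) \<or> a mod p < b mod p"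
      thus "\<exists>j. digit p a j < digit p b j"
        by (metis digit_0 digit_Suc)
    next
      assume "\<exists>j. digit p a j < digit p b j"
      then obtain j where "digit p a j < digit p b j" by blast
      thus "(\<exists>j. digit p (a div p) j < digit p (b div p) j) \<or> a mod p < b mod p"
        by (cases j) (auto simp: digit_0 digit_Suc)
    qed
    finally show ?thesis .
  qed
qed

lemma digit_lt: "p > 0 \<Longrightarrow> digit p x j < p" by (simp add: digit_def)

lemma digit_high:
  assumes "p > 0" "x < p ^ f" "f \<le> j" shows "digit p x j = 0"
proof -
  have "p ^ f \<le> p ^ j" using assms by (simp add: power_increasing)
  hence "x div p ^ j = 0" using assms by simp
  thus ?thesis by (simp add: digit_def)
qed

lemma compl_divmod:
  fixes p N x :: nat
  assumes "p > 0" "x < p * N"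
  shows "(p * N - 1 - x) mod p = p - 1 - x mod p \<and> (p * N - 1 - x) div p = N - 1 - x div p"
proof -
  define A B where "A = x div p" and "B = x mod p"
  have x: "x = p * A + B" unfolding A_def B_def by simp
  have B: "B < p" unfolding B_def using assms by simp
  have "A < N" using assms unfolding A_def by (simp add: div_less_iff_less_mult mult.commute)
  then obtain N' where N: "N = A + 1 + N'" by (metis add.commute less_imp_Suc_add Suc_eq_plus1 add.assoc)
  have e: "p * N - 1 - x = p * N' + (p - 1 - B)"
    unfolding N x using B by (simp add: algebra_simps)
  have NN: "N - 1 - A = N'" using N by simp
  have c: "p - 1 - B < p" using B by simp
  have m: "(p * N' + (p - 1 - B)) mod p = p - 1 - B" by (metis c mod_mult_self4 mod_less)
  have d: "(p * N' + (p - 1 - B)) div p = N'" using c assms(1) by (simp only: div_mult_self4 div_less)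
  show ?thesis unfolding e A_def[symmetric] B_def[symmetric] NN by (rule conjI[OF m d])
qed

lemma digit_compl:
  assumes "p > 1" "x < p ^ f" "j < f"
  shows "digit p (p ^ f - 1 - x) j = p - 1 - digit p x j"
  using assms(2,3)
proof (induction j arbitrary: x f)
  case 0
  then obtain f' where f: "f = Suc f'" by (cases f) auto
  have "x < p * p ^ f'" using 0 f by simp
  thus ?case using compl_divmod[of p x "p ^ f'"] assms f by (simp add: digit_0)
next
  case (Suc j)
  then obtain f' where f: "f = Suc f'" by (cases f) auto
  have x: "x < p * p ^ f'" using Suc f by simp
  have "x div p < p ^ f'" using x assms by (simp add: div_less_iff_less_mult mult.commute)
  hence "digit p (p ^ f' - 1 - x div p) j = p - 1 - digit p (x div p) j"
    using Suc f by (intro Suc.IH) auto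
  moreover have "(p ^ f - 1 - x) div p = p ^ f' - 1 - x div p"
    using compl_divmod[of p x "p ^ f'"] x assms f by simp
  ultimately show ?case by (simp add: digit_Suc)
qed

lemma digit_top:
  assumes "p > 1" "x < p ^ f" "f \<ge> 1"
  shows "digit p x (f - 1) = x div p ^ (f - 1)"
proof -
  have "p ^ f = p ^ (f - 1) * p" using assms(3) by (metis Suc_diff_1 less_le_trans zero_less_one power_Suc2)
  hence "x div p ^ (f - 1) < p" using assms by (simp add: div_less_iff_less_mult mult.commute)
  thus ?thesis by (simp add: digit_def)
qed

lemma char_of_card:
  assumes "CARD('k::{field,finite}) = p ^ f" "prime p" "f \<ge> 1"
  shows "CHAR('k) = p"
  using ff_char[OF assms] by (intro CHAR_eqI) auto

lemma lucas_bounded: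
  assumes "CARD('k::{field,finite}) = p ^ f" "prime p" "f \<ge> 1" "s \<le> a" "a < p ^ f"
  shows "p dvd (a choose s) \<longleftrightarrow> (\<exists>j. j + 1 < f \<and> digit p a j < digit p s j)"
proof -
  have p1: "p > 1" using assms(2) prime_gt_1_nat by blast
  have L: "p dvd (a choose s) \<longleftrightarrow> (\<exists>j. digit p a j < digit p s j)"
    by (rule lucas[OF char_of_card[OF assms(1-3)] assms(2)])
  show ?thesis
  proof
    assume "p dvd (a choose s)"
    then obtain j where j: "digit p a j < digit p s j" using L by blast
    have sl: "s < p ^ f" using assms by simp
    have "j < f"
    proof (rule ccontr)
      assume "\<not> j < f"
      hence "digit p s j = 0" using digit_high[of p s f j] sl p1 by simp
      thus False using j by simp
    qed
    moreover have "j \<noteq> f - 1"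
    proof
      assume "j = f - 1"
      hence "a div p ^ (f - 1) < s div p ^ (f - 1)" using j digit_top[of p a f] digit_top[of p s f] p1 sl assms by simp
      moreover have "s div p ^ (f - 1) \<le> a div p ^ (f - 1)" using assms(4) by (rule div_le_mono)
      ultimately show False by simp
    qed
    ultimately show "\<exists>j. j + 1 < f \<and> digit p a j < digit p s j" using j by (intro exI[of _ j]) auto
  qed (use L in blast)
qed

lemma trans1:
  assumes "CARD('k::{field,finite}) = p ^ f" "prime p" "f \<ge> 1" and q: "q = p ^ f"
    and r: "0 < r" "r < q - 1" and i: "i \<le> q - 1"
  shows "(i < q - 1 - r \<or> p dvd (r choose (q - 1 - i))) \<longleftrightarrow>
     (i \<le> q - 2 - r \<or> (i > q - 1 - r \<and> (\<exists>j. j + 1 < f \<and> digit p i j < p - 1 - digit p r j)))"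
proof (cases "i < q - 1 - r")
  case False
  have p1: "p > 1" using assms(2) prime_gt_1_nat by blast
  have rq: "r < p ^ f" using r q by simp
  have iq: "i < p ^ f" using i q r by simp
  have L: "p dvd (r choose (q - 1 - i)) \<longleftrightarrow> (\<exists>j. j + 1 < f \<and> digit p r j < digit p (q - 1 - i) j)"
    by (rule lucas_bounded[OF assms(1-3)]) (use False r q in auto)
  have D: "digit p (q - 1 - i) j = p - 1 - digit p i j" if "j < f" for j
    unfolding q by (rule digit_compl[OF p1 iq that])
  have E: "(\<exists>j. j + 1 < f \<and> digit p r j < digit p (q - 1 - i) j) \<longleftrightarrow>
     (\<exists>j. j + 1 < f \<and> digit p i j < p - 1 - digit p r j)"
  proof -
    have "digit p r j < p - 1 - digit p i j \<longleftrightarrow> digit p i j < p - 1 - digit p r j" for j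
      using digit_lt[of p r j] digit_lt[of p i j] p1 by linarith
    thus ?thesis using D by (metis Suc_eq_plus1 Suc_lessD)
  qed
  show ?thesis
  proof (cases "i = q - 1 - r")
    case True
    hence "q - 1 - i = r" using r by simp
    hence "\<not> (\<exists>j. j + 1 < f \<and> digit p r j < digit p (q - 1 - i) j)" by simp
    thus ?thesis using L E False True r by auto
  next
    case F2: False
    thus ?thesis using L E False r by auto
  qed
qed (use r in auto)

lemma trans2:
  assumes "CARD('k::{field,finite}) = p ^ f" "prime p" "f \<ge> 1" and q: "q = p ^ f"
    and r: "0 < r" "r < q - 1" and i: "i \<le> q - 1"
  shows "(i < q - 1 - (q - 1 - r) \<or> p dvd ((q - 1 - r) choose (q - 1 - i))) \<longleftrightarrow>
     (i \<le> r - 1 \<or> (i > r \<and> (\<exists>j. j + 1 < f \<and> digit p i j < digit p r j)))"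
proof (cases "i < r")
  case False
  have p1: "p > 1" using assms(2) prime_gt_1_nat by blast
  have rq: "r < p ^ f" using r q by simp
  have iq: "i < p ^ f" using i q r by simp
  have L: "p dvd ((q - 1 - r) choose (q - 1 - i)) \<longleftrightarrow> (\<exists>j. j + 1 < f \<and> digit p (q - 1 - r) j < digit p (q - 1 - i) j)"
    by (rule lucas_bounded[OF assms(1-3)]) (use False r q in auto)
  have D: "digit p (q - 1 - i) j = p - 1 - digit p i j" if "j < f" for j
    unfolding q by (rule digit_compl[OF p1 iq that])
  have D2: "digit p (q - 1 - r) j = p - 1 - digit p r j" if "j < f" for j
    unfolding q by (rule digit_compl[OF p1 rq that])
  have E: "(\<exists>j. j + 1 < f \<and> digit p (q - 1 - r) j < digit p (q - 1 - i) j) \<longleftrightarrow>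
     (\<exists>j. j + 1 < f \<and> digit p i j < digit p r j)"
  proof -
    have "p - 1 - digit p r j < p - 1 - digit p i j \<longleftrightarrow> digit p i j < digit p r j" for j
      using digit_lt[of p r j] digit_lt[of p i j] p1 by linarith
    thus ?thesis using D D2 by (metis Suc_eq_plus1 Suc_lessD)
  qed
  have qr: "q - 1 - (q - 1 - r) = r" using r by simp
  show ?thesis
  proof (cases "i = r")
    case True
    thus ?thesis using L E False True qr r by auto
  next
    case F2: False
    thus ?thesis using L E False qr r by auto
  qed
qed (use r in auto)



locale padic =
  fixes \<O> :: "'a::field_char_0 set" and pi :: 'a and red :: "'a \<Rightarrow> 'k::{field,finite}" and p f :: nat
  assumes ax: "padic_setup \<O> pi red p f"
begin

lemma prime_p: "prime p" and f1: "f \<ge> 1" and card_k: "CARD('k) = p ^ f"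
  using ax unfolding padic_setup_def by auto

lemma O0[simp]: "0 \<in> \<O>" and O1[simp]: "1 \<in> \<O>" and Opi[simp]: "pi \<in> \<O>"
  and pi_nz[simp]: "pi \<noteq> 0" and invpi: "inverse pi \<notin> \<O>"
  using ax unfolding padic_setup_def by auto

lemma Oadd[simp,intro]: "x \<in> \<O> \<Longrightarrow> y \<in> \<O> \<Longrightarrow> x + y \<in> \<O>"
  and Omult[simp,intro]: "x \<in> \<O> \<Longrightarrow> y \<in> \<O> \<Longrightarrow> x * y \<in> \<O>"
  and Oneg[simp,intro]: "x \<in> \<O> \<Longrightarrow> - x \<in> \<O>"
  using ax unfolding padic_setup_def by auto

lemma Odiff[simp,intro]: "x \<in> \<O> \<Longrightarrow> y \<in> \<O> \<Longrightarrow> x - y \<in> \<O>"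
  using Oadd[of x "- y"] Oneg[of y] by simp

lemma Opow[simp,intro]: "x \<in> \<O> \<Longrightarrow> x ^ n \<in> \<O>"
  by (induction n) auto

lemma Osum[intro]: "(\<And>i. i \<in> A \<Longrightarrow> g i \<in> \<O>) \<Longrightarrow> sum g A \<in> \<O>"
  by (induction A rule: infinite_finite_induct) auto

lemma red_add[simp]: "x \<in> \<O> \<Longrightarrow> y \<in> \<O> \<Longrightarrow> red (x + y) = red x + red y"
  and red_mult[simp]: "x \<in> \<O> \<Longrightarrow> y \<in> \<O> \<Longrightarrow> red (x * y) = red x * red y"
  and red1[simp]: "red 1 = 1"
  using ax unfolding padic_setup_def by auto

lemma red0[simp]: "red 0 = 0"
proof -
  have "red 0 = red 0 + red 0" using red_add[of 0 0] by simp
  thus ?thesis by (metis add_cancel_right_right)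
qed

lemma red_neg[simp]: "x \<in> \<O> \<Longrightarrow> red (- x) = - red x"
proof -
  assume x: "x \<in> \<O>"
  have "red x + red (- x) = 0" using red_add[of x "- x"] x by simp
  thus ?thesis by (metis neg_eq_iff_add_eq_0)
qed

lemma red_diff[simp]: "x \<in> \<O> \<Longrightarrow> y \<in> \<O> \<Longrightarrow> red (x - y) = red x - red y"
  using red_add[of x "- y"] by simp

lemma red_pow[simp]: "x \<in> \<O> \<Longrightarrow> red (x ^ n) = red x ^ n"
  by (induction n) auto

lemma red_sum: "(\<And>i. i \<in> A \<Longrightarrow> g i \<in> \<O>) \<Longrightarrow> red (sum g A) = (\<Sum>i\<in>A. red (g i))"
proof (induction A rule: infinite_finite_induct)
  case (insert x F)
  have "sum g F \<in> \<O>" using insert.prems by (intro Osum) auto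
  thus ?case using insert by simp
qed auto

lemma red_surj: "\<exists>y\<in>\<O>. red y = t"
  using ax unfolding padic_setup_def by (metis UNIV_I imageE)

lemma red_ker: "x \<in> \<O> \<Longrightarrow> red x = 0 \<longleftrightarrow> (\<exists>y\<in>\<O>. x = pi * y)"
  using ax unfolding padic_setup_def by auto

lemma val: "x \<noteq> 0 \<Longrightarrow> \<exists>m::int. \<exists>u\<in>\<O>. inverse u \<in> \<O> \<and> x = pi powi m * u"
  using ax unfolding padic_setup_def by auto

lemma complete: "(\<forall>k. s k \<in> \<O> \<and> (\<exists>y\<in>\<O>. s (Suc k) - s k = pi ^ k * y)) \<Longrightarrow>
        (\<exists>l\<in>\<O>. \<forall>k. \<exists>y\<in>\<O>. l - s k = pi ^ k * y)"
  using ax unfolding padic_setup_def by blast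

definition dv :: "nat \<Rightarrow> 'a \<Rightarrow> bool" where "dv k x \<longleftrightarrow> (\<exists>y\<in>\<O>. x = pi ^ k * y)"

lemma dv_O: "dv k x \<Longrightarrow> x \<in> \<O>" unfolding dv_def by auto
lemma dv_0: "x \<in> \<O> \<Longrightarrow> dv 0 x" unfolding dv_def by auto
lemma dv_zero[simp]: "dv k 0" unfolding dv_def by (intro bexI[of _ 0]) auto
lemma dv_add: "dv k x \<Longrightarrow> dv k y \<Longrightarrow> dv k (x + y)"
proof -
  assume "dv k x" "dv k y"
  then obtain u v where "u \<in> \<O>" "x = pi ^ k * u" "v \<in> \<O>" "y = pi ^ k * v" unfolding dv_def by blast
  hence "u + v \<in> \<O>" "x + y = pi ^ k * (u + v)" by (simp_all add: distrib_left)
  thus ?thesis unfolding dv_def by blast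
qed
lemma dv_neg: "dv k x \<Longrightarrow> dv k (- x)"
proof -
  assume "dv k x"
  then obtain u where "u \<in> \<O>" "x = pi ^ k * u" unfolding dv_def by blast
  hence "- u \<in> \<O>" "- x = pi ^ k * (- u)" by simp_all
  thus ?thesis unfolding dv_def by blast
qed
lemma dv_diff: "dv k x \<Longrightarrow> dv k y \<Longrightarrow> dv k (x - y)"
  using dv_add[of k x "- y"] dv_neg[of k y] by simp
lemma dv_multR: "dv k x \<Longrightarrow> y \<in> \<O> \<Longrightarrow> dv k (x * y)"
proof -
  assume "dv k x" "y \<in> \<O>"
  then obtain u where "u \<in> \<O>" "x = pi ^ k * u" unfolding dv_def by blast
  hence "u * y \<in> \<O>" "x * y = pi ^ k * (u * y)" using \<open>y \<in> \<O>\<close> by (simp_all add: mult.assoc)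
  thus ?thesis unfolding dv_def by blast
qed
lemma dv_multL: "dv k x \<Longrightarrow> y \<in> \<O> \<Longrightarrow> dv k (y * x)"
  using dv_multR[of k x y] by (simp add: mult.commute)
lemma dv_mult2: "dv a x \<Longrightarrow> dv b y \<Longrightarrow> dv (a + b) (x * y)"
proof -
  assume "dv a x" "dv b y"
  then obtain u v where "u \<in> \<O>" "x = pi ^ a * u" "v \<in> \<O>" "y = pi ^ b * v" unfolding dv_def by blast
  hence "u * v \<in> \<O>" "x * y = pi ^ (a + b) * (u * v)" by (simp_all add: power_add mult_ac)
  thus ?thesis unfolding dv_def by blast
qed
lemma dv_mono: "dv k x \<Longrightarrow> j \<le> k \<Longrightarrow> dv j x"
proof -
  assume "dv k x" "j \<le> k"
  then obtain y where y: "y \<in> \<O>" "x = pi ^ k * y" unfolding dv_def by auto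
  have "pi ^ k = pi ^ j * pi ^ (k - j)" using \<open>j \<le> k\<close> by (simp flip: power_add)
  hence "x = pi ^ j * (pi ^ (k - j) * y)" using y by (simp add: mult.assoc)
  moreover have "pi ^ (k - j) * y \<in> \<O>" using y by simp
  ultimately show "dv j x" unfolding dv_def by blast
qed
lemma dv_pow: "y \<in> \<O> \<Longrightarrow> dv k (pi ^ k * y)" unfolding dv_def by auto
lemma dv_cancel: "dv (k + j) (pi ^ k * x) \<Longrightarrow> dv j x"
  unfolding dv_def by (auto simp: power_add mult.assoc)
lemma dv1_red: "x \<in> \<O> \<Longrightarrow> dv 1 x \<longleftrightarrow> red x = 0"
  using red_ker[of x] unfolding dv_def by simp
lemma dv_div: "dv k x \<longleftrightarrow> x / pi ^ k \<in> \<O>"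
proof
  assume "dv k x" then obtain y where "y \<in> \<O>" "x = pi ^ k * y" unfolding dv_def by auto
  thus "x / pi ^ k \<in> \<O>" by simp
next
  assume "x / pi ^ k \<in> \<O>"
  moreover have "x = pi ^ k * (x / pi ^ k)" by simp
  ultimately show "dv k x" unfolding dv_def by blast
qed

lemma powi_neg_notin: "m < 0 \<Longrightarrow> pi powi m \<notin> \<O>"
proof
  assume m: "m < 0" and I: "pi powi m \<in> \<O>"
  obtain k' where k: "m = - int (Suc k')" using m by (intro that[of "nat (- m) - 1"]) linarith
  have e1: "pi powi m = inverse pi ^ Suc k'" unfolding k by (simp only: power_int_minus power_int_of_nat power_inverse)
  have "inverse pi ^ Suc k' * pi ^ k' = inverse pi * (inverse pi * pi) ^ k'"
    by (simp only: power_Suc power_mult_distrib mult.assoc)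
  also have "\<dots> = inverse pi" by simp
  finally have "inverse pi = pi powi m * pi ^ k'" using e1 by simp
  hence "inverse pi \<in> \<O>" using I by simp
  thus False using invpi by simp
qed

lemma powi_unit: "pi powi d = w \<Longrightarrow> w \<in> \<O> \<Longrightarrow> inverse w \<in> \<O> \<Longrightarrow> d = 0"
proof -
  assume e: "pi powi d = w" "w \<in> \<O>" "inverse w \<in> \<O>"
  show "d = 0"
  proof (rule ccontr)
    assume "d \<noteq> 0"
    then consider "d < 0" | "d > 0" by linarith
    thus False
    proof cases
      case 1 thus False using powi_neg_notin e by blast
    next
      case 2
      have "pi powi (- d) = inverse w" using e by (simp add: power_int_minus)
      thus False using powi_neg_notin[of "- d"] 2 e by simp
    qed
  qed
qed

lemma unit_of_red: "x \<in> \<O> \<Longrightarrow> red x \<noteq> 0 \<Longrightarrow> inverse x \<in> \<O>"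
proof -
  assume x: "x \<in> \<O>" "red x \<noteq> 0"
  hence "x \<noteq> 0" by auto
  then obtain m u where u: "u \<in> \<O>" "inverse u \<in> \<O>" "x = pi powi m * u" using val by blast
  consider "m < 0" | "m = 0" | "m > 0" by linarith
  thus ?thesis
  proof cases
    case 1
    have "pi powi m = x * inverse u" using u \<open>x \<noteq> 0\<close> by (simp add: field_simps)
    moreover have "x * inverse u \<in> \<O>" using x u by (intro Omult)
    ultimately have "pi powi m \<in> \<O>" by simp
    thus ?thesis using powi_neg_notin 1 by blast
  next
    case 2 thus ?thesis using u by simp
  next
    case 3
    obtain k' where k: "nat m = Suc k'" using 3 by (metis gr0_implies_Suc zero_less_nat_eq)
    have "pi powi m = pi ^ Suc k'" using 3 k by (simp add: power_int_nonneg_exp)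
    hence "x = pi * (pi ^ k' * u)" using u by (simp add: mult.assoc)
    moreover have "pi ^ k' * u \<in> \<O>" using u by simp
    ultimately have "red x = 0" using red_ker[of x] x by blast
    thus ?thesis using x by simp
  qed
qed

lemma red_unit_nz: "x \<noteq> 0 \<Longrightarrow> x \<in> \<O> \<Longrightarrow> inverse x \<in> \<O> \<Longrightarrow> red x \<noteq> 0"
proof
  assume "x \<noteq> 0" "x \<in> \<O>" "inverse x \<in> \<O>" "red x = 0"
  hence "red (x * inverse x) = 1" by simp
  thus False using \<open>x \<in> \<O>\<close> \<open>inverse x \<in> \<O>\<close> \<open>red x = 0\<close> by simp
qed

lemma dv_all_zero: "(\<forall>k. dv k x) \<Longrightarrow> x = 0"
proof (rule ccontr)
  assume A: "\<forall>k. dv k x" and "x \<noteq> 0"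
  then obtain m u where u: "u \<in> \<O>" "inverse u \<in> \<O>" "x = pi powi m * u" using val by blast
  define k where "k = nat m + 1"
  obtain y where y: "y \<in> \<O>" "x = pi ^ k * y" using A unfolding dv_def by blast
  have "pi powi (m - int k) = y * inverse u"
    using u y \<open>x \<noteq> 0\<close> by (simp add: power_int_diff field_simps)
  hence "pi powi (m - int k) \<in> \<O>" using y u by simp
  moreover have "m - int k < 0" unfolding k_def by simp
  ultimately show False using powi_neg_notin by blast
qed

section \<open>Teichmueller\<close>

lemma ff_pow_card_pow: "(t::'k) ^ (CARD('k) ^ k) = t"
proof (induction k)
  case (Suc k)
  have "t ^ (CARD('k) ^ Suc k) = (t ^ (CARD('k) ^ k)) ^ CARD('k)" by (simp only: power_Suc2 power_mult)
  thus ?case using Suc ff_pow_card by simp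
qed simp

lemma pow_q_cong:
  assumes "x \<in> \<O>" "y \<in> \<O>" "dv k (x - y)" "k \<ge> 1"
  shows "dv (k + 1) (x ^ CARD('k) - y ^ CARD('k))"
proof -
  define q where "q = CARD('k)"
  have q1: "q \<ge> 1" unfolding q_def using ff_card_ge2[where 'k='k] by simp
  define S where "S = (\<Sum>i<q. y ^ (q - Suc i) * x ^ i)"
  have e: "x ^ q - y ^ q = (x - y) * S" unfolding S_def by (rule power_diff_sumr2)
  have SO: "S \<in> \<O>" unfolding S_def using assms by (intro Osum) auto
  have "dv 1 (x - y)" using assms(3,4) by (rule dv_mono)
  hence rxy: "red x = red y" using dv1_red[of "x - y"] assms by simp
  have "red S = (\<Sum>i<q. red y ^ (q - Suc i) * red x ^ i)"
    unfolding S_def using assms by (subst red_sum) auto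
  also have "\<dots> = (\<Sum>i<q. red x ^ (q - 1))"
    by (intro sum.cong refl) (simp add: rxy power_add[symmetric])
  also have "\<dots> = of_nat q * red x ^ (q - 1)" by simp
  also have "of_nat q = (0::'k)" unfolding q_def by (rule ff_of_nat_card)
  finally have "dv 1 S" using dv1_red[OF SO] by simp
  hence "dv (k + 1) ((x - y) * S)" by (rule dv_mult2[OF assms(3)])
  thus ?thesis using e unfolding q_def by simp
qed

lemma teich_exists: "\<exists>y. y \<in> \<O> \<and> red y = t \<and> y ^ CARD('k) = y"
proof -
  define q where "q = CARD('k)"
  obtain y0 where y0: "y0 \<in> \<O>" "red y0 = t" using red_surj by blast
  define s where "s k = y0 ^ (q ^ k)" for k
  have sO: "s k \<in> \<O>" for k unfolding s_def using y0 by simp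
  have sred: "red (s k) = t" for k unfolding s_def q_def using y0 by (simp add: ff_pow_card_pow)
  have sS: "s (Suc k) = s k ^ q" for k unfolding s_def by (simp only: power_Suc2 power_mult)
  have C: "dv (k + 1) (s (Suc k) - s k)" for k
  proof (induction k)
    case 0
    show ?case using dv1_red[of "s 1 - s 0"] sO sred by simp
  next
    case (Suc k)
    have "dv (Suc k + 1) (s (Suc k) ^ q - s k ^ q)"
      unfolding q_def by (rule pow_q_cong) (use sO Suc in auto)
    thus ?case by (simp add: sS)
  qed
  have "\<forall>k. s k \<in> \<O> \<and> (\<exists>y\<in>\<O>. s (Suc k) - s k = pi ^ k * y)"
    using C sO dv_mono unfolding dv_def[symmetric] by (metis le_add1)
  then obtain l where l: "l \<in> \<O>" "\<forall>k. \<exists>y\<in>\<O>. l - s k = pi ^ k * y" using complete by blast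
  have ld: "dv k (l - s k)" for k using l unfolding dv_def by blast
  have "dv k (l ^ q - l)" for k
  proof (cases "k = 0")
    case True thus ?thesis using l dv_0[of "l ^ q - l"] by simp
  next
    case False
    have a: "dv (k + 1) (l ^ q - s k ^ q)" unfolding q_def by (rule pow_q_cong) (use l sO ld False in auto)
    have b: "dv (k + 1) (s (Suc k) - l)" using dv_neg[OF ld[of "Suc k"]] by simp
    have "dv (k + 1) ((l ^ q - s k ^ q) + (s (Suc k) - l))" by (rule dv_add[OF a b])
    hence "dv k ((l ^ q - s k ^ q) + (s (Suc k) - l))" by (rule dv_mono) simp
    thus ?thesis by (simp add: sS)
  qed
  hence "l ^ q - l = 0" using dv_all_zero by blast
  moreover have "red l = t"
    using dv1_red[of "l - s 1"] ld[of 1] l sO sred by simp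
  ultimately show ?thesis using l unfolding q_def by auto
qed

lemma teich_unique:
  assumes "y \<in> \<O>" "y' \<in> \<O>" "red y = red y'" "y ^ CARD('k) = y" "y' ^ CARD('k) = y'"
  shows "y = y'"
proof -
  have "dv (Suc k) (y - y')" for k
  proof (induction k)
    case 0 thus ?case using dv1_red[of "y - y'"] assms by simp
  next
    case (Suc k)
    have "dv (Suc k + 1) (y ^ CARD('k) - y' ^ CARD('k))" by (rule pow_q_cong) (use assms Suc in auto)
    thus ?case using assms by simp
  qed
  hence "\<forall>k. dv k (y - y')" by (metis dv_mono le_SucI le_refl)
  thus ?thesis using dv_all_zero[of "y - y'"] by simp
qed

lemma teich_prop: "teich \<O> red t \<in> \<O> \<and> red (teich \<O> red t) = t \<and> teich \<O> red t ^ CARD('k) = teich \<O> red t"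
  unfolding teich_def
proof (rule theI')
  show "\<exists>!y. y \<in> \<O> \<and> red y = t \<and> y ^ CARD('k) = y"
    using teich_exists teich_unique by metis
qed

lemma teich_O[simp]: "teich \<O> red t \<in> \<O>" and teich_red[simp]: "red (teich \<O> red t) = t"
  using teich_prop by auto

end



lemma mmul_assoc: "(A \<cdot> B) \<cdot> C = A \<cdot> (B \<cdot> C)" for A B C :: "'b::comm_ring_1 mat2"
  by (cases A; cases B; cases C) (simp add: algebra_simps)
lemma smul_mmul: "smul z A \<cdot> B = smul z (A \<cdot> B)" for A B :: "'b::comm_ring_1 mat2"
  by (cases A; cases B) (simp add: algebra_simps)
lemma mmul_smul: "A \<cdot> smul z B = smul z (A \<cdot> B)" for A B :: "'b::comm_ring_1 mat2"
  by (cases A; cases B) (simp add: algebra_simps)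
lemma smul_smul: "smul z (smul w A) = smul (z * w) A" for A :: "'b::comm_ring_1 mat2"
  by (cases A) (simp add: algebra_simps)
lemma smul_one[simp]: "smul 1 A = A" for A :: "'b::comm_ring_1 mat2"
  by (cases A) simp
lemma det_mmul: "det2 (A \<cdot> B) = det2 A * det2 B" for A B :: "'b::comm_ring_1 mat2"
  by (cases A; cases B) (simp add: algebra_simps)
lemma det_smul: "det2 (smul z A) = z ^ 2 * det2 A" for A :: "'b::comm_ring_1 mat2"
  by (cases A) (simp add: algebra_simps power2_eq_square)
lemma I_left[simp]: "M2 1 0 0 1 \<cdot> A = A" for A :: "'b::comm_ring_1 mat2"
  by (cases A) simp
lemma I_right[simp]: "A \<cdot> M2 1 0 0 1 = A" for A :: "'b::comm_ring_1 mat2"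
  by (cases A) simp

definition minv :: "'b::field mat2 \<Rightarrow> 'b mat2" where
  "minv A = (case A of M2 a b c d \<Rightarrow> M2 (d / det2 A) (- b / det2 A) (- c / det2 A) (a / det2 A))"

lemma minv_left: "det2 A \<noteq> 0 \<Longrightarrow> minv A \<cdot> A = M2 1 0 0 1" for A :: "'b::field mat2"
proof (cases A)
  case (M2 a b c d)
  assume "det2 A \<noteq> 0"
  hence D: "a * d - b * c \<noteq> 0" using M2 by simp
  define iD where "iD = inverse (a * d - b * c)"
  have iD: "iD * (a * d - b * c) = 1" using D unfolding iD_def by simp
  have e1: "d / (a * d - b * c) * a + - b / (a * d - b * c) * c = 1"
    using iD unfolding divide_inverse iD_def[symmetric] by (simp add: algebra_simps)
  have e2: "d / (a * d - b * c) * b + - b / (a * d - b * c) * d = 0"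
    unfolding divide_inverse by (simp add: algebra_simps)
  have e3: "- c / (a * d - b * c) * a + a / (a * d - b * c) * c = 0"
    unfolding divide_inverse by (simp add: algebra_simps)
  have e4: "- c / (a * d - b * c) * b + a / (a * d - b * c) * d = 1"
    using iD unfolding divide_inverse iD_def[symmetric] by (simp add: algebra_simps)
  show ?thesis using M2 e1 e2 e3 e4 by (simp only: minv_def mat2.case det2.simps mmul.simps)
qed

lemma smul_cancel: "z \<noteq> 0 \<Longrightarrow> smul z A = smul z B \<Longrightarrow> A = B" for A B :: "'b::field mat2"
  by (cases A; cases B) simp

context padic
begin

lemma ts_Suc: "teich_sum \<O> pi red (Suc m) mu = teich_sum \<O> pi red m mu + teich \<O> red (mu m) * pi ^ m"
  by (simp add: teich_sum_def)

lemma ts_O[simp]: "teich_sum \<O> pi red m mu \<in> \<O>"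
  unfolding teich_sum_def by (intro Osum) simp

lemma ts_eq: "(\<forall>j<m. mu j = mu0 j) \<Longrightarrow> teich_sum \<O> pi red m mu = teich_sum \<O> pi red m mu0"
  unfolding teich_sum_def by (intro sum.cong) auto

lemma ts_dv: "dv m (teich_sum \<O> pi red m mu - teich_sum \<O> pi red m mu0) \<Longrightarrow> \<forall>j<m. mu j = mu0 j"
proof (induction m)
  case (Suc m)
  define D where "D = teich_sum \<O> pi red m mu - teich_sum \<O> pi red m mu0"
  define E where "E = teich \<O> red (mu m) - teich \<O> red (mu0 m)"
  have EO: "E \<in> \<O>" unfolding E_def by simp
  have e: "teich_sum \<O> pi red (Suc m) mu - teich_sum \<O> pi red (Suc m) mu0 = D + pi ^ m * E"
    unfolding D_def E_def ts_Suc by (simp add: algebra_simps)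
  have h: "dv (Suc m) (D + pi ^ m * E)" using Suc.prems e by simp
  have "dv m (D + pi ^ m * E)" using h by (rule dv_mono) simp
  moreover have "dv m (pi ^ m * E)" using EO by (rule dv_pow)
  ultimately have "dv m ((D + pi ^ m * E) - pi ^ m * E)" by (rule dv_diff)
  hence "dv m D" by simp
  hence agree: "\<forall>j<m. mu j = mu0 j" using Suc.IH unfolding D_def by blast
  hence "D = 0" unfolding D_def using ts_eq by simp
  hence "dv (m + 1) (pi ^ m * E)" using h by simp
  hence "dv 1 E" by (rule dv_cancel)
  hence "red E = 0" using dv1_red EO by simp
  hence "mu m = mu0 m" unfolding E_def by simp
  thus ?case using agree less_Suc_eq by auto
qed simp

section \<open>Iwahori\<close>

lemma Iwa_iff: "M2 a b c d \<in> Iwa \<O> pi \<longleftrightarrow> a \<in> \<O> \<and> b \<in> \<O> \<and> c \<in> \<O> \<and> d \<in> \<O> \<and>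
   det2 (M2 a b c d) \<noteq> 0 \<and> inverse (det2 (M2 a b c d)) \<in> \<O> \<and> (\<exists>y\<in>\<O>. c = pi * y)"
  unfolding Iwa_def Kgrp_def by auto

lemma Iwa_det1: "det2 (M2 a b c d) = 1 \<Longrightarrow> M2 a b c d \<in> Iwa \<O> pi \<longleftrightarrow> a \<in> \<O> \<and> b \<in> \<O> \<and> d \<in> \<O> \<and> (\<exists>y\<in>\<O>. c = pi * y)"
  unfolding Iwa_iff by auto

lemma I_Iwa: "M2 1 0 0 1 \<in> Iwa \<O> pi"
  unfolding Iwa_iff by (auto intro: bexI[of _ 0])

lemma Iwa_I: "a \<in> \<O> \<Longrightarrow> b \<in> \<O> \<Longrightarrow> d \<in> \<O> \<Longrightarrow> y \<in> \<O> \<Longrightarrow> c = pi * y \<Longrightarrow>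
   det2 (M2 a b c d) \<noteq> 0 \<Longrightarrow> inverse (det2 (M2 a b c d)) \<in> \<O> \<Longrightarrow> M2 a b c d \<in> Iwa \<O> pi"
  unfolding Iwa_iff by auto

lemma Iwa_mult: "A \<in> Iwa \<O> pi \<Longrightarrow> B \<in> Iwa \<O> pi \<Longrightarrow> A \<cdot> B \<in> Iwa \<O> pi"
proof (cases A; cases B)
  fix a b c d a' b' c' d'
  assume A: "A \<in> Iwa \<O> pi" "A = M2 a b c d" and B: "B \<in> Iwa \<O> pi" "B = M2 a' b' c' d'"
  have A': "M2 a b c d \<in> Iwa \<O> pi" using A by simp
  from A'[unfolded Iwa_iff] obtain y where y: "y \<in> \<O>" "c = pi * y" "a \<in> \<O>" "b \<in> \<O>" "c \<in> \<O>" "d \<in> \<O>"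
    "det2 (M2 a b c d) \<noteq> 0" "inverse (det2 (M2 a b c d)) \<in> \<O>" by blast
  have detA: "det2 A = det2 (M2 a b c d)" using A by simp
  have B': "M2 a' b' c' d' \<in> Iwa \<O> pi" using B by simp
  from B'[unfolded Iwa_iff] obtain y' where y': "y' \<in> \<O>" "c' = pi * y'" "a' \<in> \<O>" "b' \<in> \<O>" "c' \<in> \<O>" "d' \<in> \<O>"
    "det2 (M2 a' b' c' d') \<noteq> 0" "inverse (det2 (M2 a' b' c' d')) \<in> \<O>" by blast
  have detB: "det2 B = det2 (M2 a' b' c' d')" using B by simp
  have AB: "A \<cdot> B = M2 (a*a' + b*c') (a*b' + b*d') (c*a' + d*c') (c*b' + d*d')" using A B by simp
  have det: "det2 (A \<cdot> B) = det2 A * det2 B" by (rule det_mmul)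
  have ll: "c * a' + d * c' = pi * (y * a' + d * y')" using y y' by (simp add: algebra_simps)
  have "M2 (a*a' + b*c') (a*b' + b*d') (c*a' + d*c') (c*b' + d*d') \<in> Iwa \<O> pi"
  proof (rule Iwa_I[OF _ _ _ _ ll])
    show "a*a' + b*c' \<in> \<O>" "a*b' + b*d' \<in> \<O>" "c*b' + d*d' \<in> \<O>" "y * a' + d * y' \<in> \<O>"
      using y y' by auto
    show "det2 (M2 (a*a' + b*c') (a*b' + b*d') (c*a' + d*c') (c*b' + d*d')) \<noteq> 0"
      using det AB y y' detA detB by (simp only:) simp
    show "inverse (det2 (M2 (a*a' + b*c') (a*b' + b*d') (c*a' + d*c') (c*b' + d*d'))) \<in> \<O>"
      using det AB y(7,8) y'(7,8) detA detB by (simp add: inverse_mult_distrib)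
  qed
  thus ?thesis using AB by simp
qed

lemma Iwa_minv: "A \<in> Iwa \<O> pi \<Longrightarrow> minv A \<in> Iwa \<O> pi"
proof (cases A)
  fix a b c d
  assume A: "A \<in> Iwa \<O> pi" "A = M2 a b c d"
  define D where "D = det2 A"
  have A': "M2 a b c d \<in> Iwa \<O> pi" using A by simp
  from A'[unfolded Iwa_iff] obtain y where y: "y \<in> \<O>" "c = pi * y" "a \<in> \<O>" "b \<in> \<O>" "c \<in> \<O>" "d \<in> \<O>"
    "D \<noteq> 0" "inverse D \<in> \<O>" unfolding D_def using A by auto
  have m: "minv A = M2 (d * inverse D) (- b * inverse D) (- c * inverse D) (a * inverse D)"
    using A unfolding minv_def D_def by (simp add: divide_inverse)
  have dm: "det2 (M2 (d * inverse D) (- b * inverse D) (- c * inverse D) (a * inverse D)) = inverse D"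
  proof -
    have "det2 (M2 (d * inverse D) (- b * inverse D) (- c * inverse D) (a * inverse D)) = inverse D * (inverse D * D)"
      using A unfolding D_def by (simp add: algebra_simps)
    thus ?thesis using y by simp
  qed
  have ll: "- c * inverse D = pi * (- y * inverse D)" using y by simp
  show ?thesis unfolding m
  proof (rule Iwa_I[OF _ _ _ _ ll])
    show "d * inverse D \<in> \<O>" "- b * inverse D \<in> \<O>" "a * inverse D \<in> \<O>" "- y * inverse D \<in> \<O>"
      using y by auto
    show "det2 (M2 (d * inverse D) (- b * inverse D) (- c * inverse D) (a * inverse D)) \<noteq> 0"
      using dm y by simp
    show "inverse (det2 (M2 (d * inverse D) (- b * inverse D) (- c * inverse D) (a * inverse D))) \<in> \<O>"
      using dm y A unfolding D_def by (simp add: Iwa_iff)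
  qed
qed

lemma Iwa_smul_unit: "u \<in> \<O> \<Longrightarrow> inverse u \<in> \<O> \<Longrightarrow> u \<noteq> 0 \<Longrightarrow> A \<in> Iwa \<O> pi \<Longrightarrow> smul u A \<in> Iwa \<O> pi"
proof (cases A)
  fix a b c d
  assume u: "u \<in> \<O>" "inverse u \<in> \<O>" "u \<noteq> 0" and A: "A \<in> Iwa \<O> pi" "A = M2 a b c d"
  have A': "M2 a b c d \<in> Iwa \<O> pi" using A by simp
  from A'[unfolded Iwa_iff] obtain y where y: "y \<in> \<O>" "c = pi * y" "a \<in> \<O>" "b \<in> \<O>" "c \<in> \<O>" "d \<in> \<O>"
    "det2 (M2 a b c d) \<noteq> 0" "inverse (det2 (M2 a b c d)) \<in> \<O>" by blast
  have detA: "det2 A = det2 (M2 a b c d)" using A by simp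
  have d: "det2 (M2 (u*a) (u*b) (u*c) (u*d)) = u ^ 2 * det2 A" using det_smul[of u A] A by simp
  have ll: "u * c = pi * (u * y)" using y by simp
  have "M2 (u*a) (u*b) (u*c) (u*d) \<in> Iwa \<O> pi"
  proof (rule Iwa_I[OF _ _ _ _ ll])
    show "u*a \<in> \<O>" "u*b \<in> \<O>" "u*d \<in> \<O>" "u*y \<in> \<O>" using u y by auto
    show "det2 (M2 (u*a) (u*b) (u*c) (u*d)) \<noteq> 0" using d u y(7) detA by simp
    have e: "inverse (det2 (M2 (u*a) (u*b) (u*c) (u*d))) = inverse u ^ 2 * inverse (det2 A)"
      unfolding d by (simp add: inverse_mult_distrib power_inverse)
    have "inverse u ^ 2 * inverse (det2 A) \<in> \<O>" using u y(8) detA by (intro Omult Opow) simp_all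
    thus "inverse (det2 (M2 (u*a) (u*b) (u*c) (u*d))) \<in> \<O>" using e by simp
  qed
  thus ?thesis using A by simp
qed

lemma Iwa_red_c: "M2 a b c d \<in> Iwa \<O> pi \<Longrightarrow> red c = 0"
  unfolding Iwa_iff using red_ker by auto

lemma Iwa_Od: "M2 a b c d \<in> Iwa \<O> pi \<Longrightarrow> a \<in> \<O> \<and> b \<in> \<O> \<and> c \<in> \<O> \<and> d \<in> \<O>"
  unfolding Iwa_iff by auto

lemma Iwa_det: "A \<in> Iwa \<O> pi \<Longrightarrow> det2 A \<noteq> 0 \<and> det2 A \<in> \<O> \<and> inverse (det2 A) \<in> \<O>"
  by (cases A) (auto simp: Iwa_iff)

section \<open>IZ and chi\<close>

lemma IZ_norm: "X \<in> IZ \<O> pi \<Longrightarrow> \<exists>m k. k \<in> Iwa \<O> pi \<and> X = smul (pi powi m) k"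
proof -
  assume "X \<in> IZ \<O> pi"
  then obtain z k where zk: "z \<noteq> 0" "k \<in> Iwa \<O> pi" "X = smul z k" unfolding IZ_def by auto
  then obtain m u where u: "u \<in> \<O>" "inverse u \<in> \<O>" "z = pi powi m * u" using val by blast
  have "u \<noteq> 0" using u zk by auto
  hence "smul u k \<in> Iwa \<O> pi" using u zk by (intro Iwa_smul_unit) auto
  moreover have "X = smul (pi powi m) (smul u k)" using zk u by (simp add: smul_smul)
  ultimately show ?thesis by blast
qed

lemma IZ_intro: "k \<in> Iwa \<O> pi \<Longrightarrow> smul (pi powi m) k \<in> IZ \<O> pi"
proof -
  assume k: "k \<in> Iwa \<O> pi"
  have "pi powi m \<noteq> 0" by (simp add: power_int_not_zero)
  thus ?thesis unfolding IZ_def using k by blast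
qed

lemma powi_cancel_Iwa:
  assumes "k \<in> Iwa \<O> pi" "k' \<in> Iwa \<O> pi" "smul (pi powi m) k = smul (pi powi m') k'"
  shows "m = m' \<and> k = k'"
proof -
  define A B where "A = (pi powi m) ^ 2" and "B = (pi powi m') ^ 2"
  have B0: "B \<noteq> 0" unfolding B_def by (simp add: power_int_not_zero)
  have "det2 (smul (pi powi m) k) = det2 (smul (pi powi m') k')" using assms(3) by simp
  hence e: "A * det2 k = B * det2 k'" unfolding A_def B_def by (simp only: det_smul)
  have dk: "det2 k \<noteq> 0" "det2 k \<in> \<O>" "inverse (det2 k) \<in> \<O>" using Iwa_det[OF assms(1)] by auto
  have dk': "det2 k' \<noteq> 0" "det2 k' \<in> \<O>" "inverse (det2 k') \<in> \<O>" using Iwa_det[OF assms(2)] by auto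
  define w where "w = det2 k' * inverse (det2 k)"
  have "A = A * det2 k * inverse (det2 k)" using dk by simp
  also have "\<dots> = B * w" unfolding w_def using e by (simp add: mult.assoc)
  finally have AB: "A = B * w" .
  have p2: "(pi powi (m - m')) ^ 2 = pi powi ((m - m') * int 2)" by (rule power_int_power')
  have "pi powi (2 * (m - m')) = (pi powi (m - m')) ^ 2" unfolding p2 by (simp only: of_nat_numeral mult.commute)
  also have "pi powi (m - m') = pi powi m / pi powi m'" by (simp add: power_int_diff)
  also have "(pi powi m / pi powi m') ^ 2 = A / B" unfolding A_def B_def by (rule power_divide)
  also have "A / B = w" using AB B0 by simp
  finally have pw: "pi powi (2 * (m - m')) = w" .
  have wO: "w \<in> \<O>" unfolding w_def using dk dk' by simp
  have wi: "inverse w = inverse (det2 k') * det2 k" unfolding w_def by (simp add: inverse_mult_distrib)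
  have "inverse w \<in> \<O>" unfolding wi using dk dk' by simp
  hence "2 * (m - m') = 0" using powi_unit[OF pw wO] by simp
  hence mm: "m = m'" by simp
  have "pi powi m \<noteq> 0" by (simp add: power_int_not_zero)
  moreover have "smul (pi powi m) k = smul (pi powi m) k'" using assms(3) mm by simp
  ultimately have "k = k'" by (rule smul_cancel)
  thus ?thesis using mm by simp
qed

lemma chi_eval: "k \<in> Iwa \<O> pi \<Longrightarrow> chi \<O> pi red r (smul (pi powi m) k) = red (dent k) ^ r"
  unfolding chi_def
proof (rule the_equality)
  assume k: "k \<in> Iwa \<O> pi"
  show "\<exists>m'. \<exists>k'\<in>Iwa \<O> pi. smul (pi powi m) k = smul (pi powi m') k' \<and> red (dent k) ^ r = red (dent k') ^ r"
    using k by blast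
  fix v assume "\<exists>m'. \<exists>k'\<in>Iwa \<O> pi. smul (pi powi m) k = smul (pi powi m') k' \<and> v = red (dent k') ^ r"
  then obtain m' k' where "k' \<in> Iwa \<O> pi" "smul (pi powi m) k = smul (pi powi m') k'" "v = red (dent k') ^ r" by blast
  thus "v = red (dent k) ^ r" using powi_cancel_Iwa[OF k] by blast
qed

end



context padic
begin

lemma step:
  assumes hit: "x \<cdot> h0 \<in> IZ \<O> pi" and dR: "det2 R = 1"
  shows "(x \<cdot> (h0 \<cdot> R) \<in> IZ \<O> pi \<longleftrightarrow> R \<in> Iwa \<O> pi) \<and>
    (R \<in> Iwa \<O> pi \<longrightarrow> chi \<O> pi red r (x \<cdot> (h0 \<cdot> R)) = chi \<O> pi red r (x \<cdot> h0) * red (dent R) ^ r)"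
proof -
  obtain m k1 where k1: "k1 \<in> Iwa \<O> pi" "x \<cdot> h0 = smul (pi powi m) k1" using IZ_norm[OF hit] by blast
  have xh: "x \<cdot> (h0 \<cdot> R) = smul (pi powi m) (k1 \<cdot> R)"
    by (simp only: mmul_assoc[symmetric] k1(2) smul_mmul)
  have A: "x \<cdot> (h0 \<cdot> R) \<in> IZ \<O> pi" if "R \<in> Iwa \<O> pi"
    unfolding xh by (intro IZ_intro Iwa_mult k1 that)
  have B: "R \<in> Iwa \<O> pi" if hh: "x \<cdot> (h0 \<cdot> R) \<in> IZ \<O> pi"
  proof -
    obtain m' k' where k': "k' \<in> Iwa \<O> pi" "x \<cdot> (h0 \<cdot> R) = smul (pi powi m') k'" using IZ_norm[OF hh] by blast
    define K where "K = minv k1 \<cdot> k'"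
    have KI: "K \<in> Iwa \<O> pi" unfolding K_def by (intro Iwa_mult Iwa_minv k1 k')
    have e0: "smul (pi powi m) (k1 \<cdot> R) = smul (pi powi m') k'" using xh k' by simp
    have "minv k1 \<cdot> smul (pi powi m) (k1 \<cdot> R) = minv k1 \<cdot> smul (pi powi m') k'" using e0 by simp
    hence "smul (pi powi m) ((minv k1 \<cdot> k1) \<cdot> R) = smul (pi powi m') K"
      unfolding K_def by (simp only: mmul_smul mmul_assoc)
    hence e: "smul (pi powi m) R = smul (pi powi m') K"
      using minv_left[of k1] Iwa_det[OF k1(1)] by simp
    have dK: "det2 K \<noteq> 0" "det2 K \<in> \<O>" "inverse (det2 K) \<in> \<O>" using Iwa_det[OF KI] by auto
    define a b where "a = (pi powi m) ^ 2" and "b = (pi powi m') ^ 2"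
    have b0: "b \<noteq> 0" unfolding b_def by (simp add: power_int_not_zero)
    have "det2 (smul (pi powi m) R) = det2 (smul (pi powi m') K)" using e by simp
    hence ab: "a = b * det2 K" unfolding a_def b_def using dR by (simp only: det_smul) simp
    have p2: "(pi powi (m - m')) ^ 2 = pi powi ((m - m') * int 2)" by (rule power_int_power')
    have "pi powi (2 * (m - m')) = (pi powi (m - m')) ^ 2" unfolding p2 by (simp only: of_nat_numeral mult.commute)
    also have "pi powi (m - m') = pi powi m / pi powi m'" by (simp add: power_int_diff)
    also have "(pi powi m / pi powi m') ^ 2 = a / b" unfolding a_def b_def by (rule power_divide)
    also have "a / b = det2 K" using ab b0 by simp
    finally have "2 * (m - m') = 0" using powi_unit dK by blast
    hence mm: "m = m'" by simp
    have "pi powi m \<noteq> 0" by (simp add: power_int_not_zero)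
    moreover have "smul (pi powi m) R = smul (pi powi m) K" using e mm by simp
    ultimately have "R = K" by (rule smul_cancel)
    thus ?thesis using KI by simp
  qed
  have C: "chi \<O> pi red r (x \<cdot> (h0 \<cdot> R)) = chi \<O> pi red r (x \<cdot> h0) * red (dent R) ^ r" if R: "R \<in> Iwa \<O> pi"
  proof -
    have "chi \<O> pi red r (x \<cdot> (h0 \<cdot> R)) = red (dent (k1 \<cdot> R)) ^ r"
      unfolding xh by (intro chi_eval Iwa_mult k1 R)
    moreover have "chi \<O> pi red r (x \<cdot> h0) = red (dent k1) ^ r"
      unfolding k1(2) by (intro chi_eval k1)
    moreover have "red (dent (k1 \<cdot> R)) = red (dent k1) * red (dent R)"
    proof (cases k1; cases R)
      fix a b c d a' b' c' d'
      assume k1e: "k1 = M2 a b c d" and Re: "R = M2 a' b' c' d'"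
      have o1: "a \<in> \<O> \<and> b \<in> \<O> \<and> c \<in> \<O> \<and> d \<in> \<O>" using k1 k1e Iwa_Od by blast
      have o2: "a' \<in> \<O> \<and> b' \<in> \<O> \<and> c' \<in> \<O> \<and> d' \<in> \<O>" using R Re Iwa_Od by blast
      have rc: "red c = 0" using k1 k1e Iwa_red_c by blast
      show ?thesis using o1 o2 rc k1e Re by simp
    qed
    ultimately show ?thesis by (simp add: power_mult_distrib)
  qed
  show ?thesis using A B C by blast
qed

lemma Tsum:
  assumes hit: "x \<cdot> H0 \<in> IZ \<O> pi"
    and HR: "\<And>s t. s \<in> S \<Longrightarrow> H s t = H0 \<cdot> R s t"
    and dR: "\<And>s t. s \<in> S \<Longrightarrow> det2 (R s t) = 1"
  shows "(\<Sum>s\<in>S. c s * (\<Sum>t\<in>UNIV. bracket \<O> pi red r (H s t) x)) =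
    chi \<O> pi red r (x \<cdot> H0) * (\<Sum>s\<in>S. c s * (\<Sum>t\<in>UNIV. if R s t \<in> Iwa \<O> pi then red (dent (R s t)) ^ r else 0))"
proof -
  have "bracket \<O> pi red r (H s t) x = chi \<O> pi red r (x \<cdot> H0) * (if R s t \<in> Iwa \<O> pi then red (dent (R s t)) ^ r else 0)"
    if s: "s \<in> S" for s t
    using step[OF hit dR[OF s], where r=r] unfolding bracket_def HR[OF s] by auto
  hence "(\<Sum>s\<in>S. c s * (\<Sum>t\<in>UNIV. bracket \<O> pi red r (H s t) x)) =
    (\<Sum>s\<in>S. c s * (\<Sum>t\<in>UNIV. chi \<O> pi red r (x \<cdot> H0) * (if R s t \<in> Iwa \<O> pi then red (dent (R s t)) ^ r else 0)))"
    by (intro sum.cong refl) simp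
  also have "\<dots> = chi \<O> pi red r (x \<cdot> H0) * (\<Sum>s\<in>S. c s * (\<Sum>t\<in>UNIV. if R s t \<in> Iwa \<O> pi then red (dent (R s t)) ^ r else 0))"
    by (simp add: sum_distrib_left mult_ac)
  finally show ?thesis .
qed

lemma Tsum_zero:
  assumes "\<not> (\<exists>s\<in>S. \<exists>t. x \<cdot> H s t \<in> IZ \<O> pi)"
  shows "(\<Sum>s\<in>S. c s * (\<Sum>t\<in>UNIV. bracket \<O> pi red r (H s t) x)) = 0"
  using assms unfolding bracket_def by (intro sum.neutral) auto

end



lemma alg1:
  fixes pi P M0 d u u0 :: "'b::comm_ring_1"
  shows "M2 (pi*P + (M0 + P*d)*pi*u) ((M0 + P*d)*pi) (pi*u) pi =
    M2 (pi*P + M0*pi*u0) (M0*pi) (pi*u0) pi \<cdot> M2 (1 + u*d) d ((u - u0) - u*u0*d) (1 - u0*d)"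
  by (simp add: algebra_simps)

lemma alg1_det:
  fixes d u u0 :: "'b::comm_ring_1"
  shows "det2 (M2 (1 + u*d) d ((u - u0) - u*u0*d) (1 - u0*d)) = 1"
  by (simp add: algebra_simps)

lemma alg2:
  fixes pi P Z0 d u u0 :: "'b::field"
  assumes "pi \<noteq> 0"
  shows "M2 (pi*(Z0 + P*d)) ((Z0 + P*d)*u + P) pi u =
    M2 (pi*Z0) (Z0*u0 + P) pi u0 \<cdot> M2 (1 - u0*d) ((u - u0 - u0*u*d)/pi) (pi*d) (1 + u*d)"
proof -
  have e: "pi * Z0 * ((u - u0 - u0*u*d)/pi) = Z0 * (u - u0 - u0*u*d)" using assms by simp
  have e2: "pi * ((u - u0 - u0*u*d)/pi) = u - u0 - u0*u*d" using assms by simp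
  show ?thesis using e e2 by (simp add: algebra_simps)
qed

lemma alg2_det:
  fixes pi d u u0 :: "'b::field"
  assumes "pi \<noteq> 0"
  shows "det2 (M2 (1 - u0*d) ((u - u0 - u0*u*d)/pi) (pi*d) (1 + u*d)) = 1"
proof -
  have e2: "((u - u0 - u0*u*d)/pi) * (pi * d) = (u - u0 - u0*u*d) * d" using assms by simp
  show ?thesis using e2 by (simp add: algebra_simps)
qed

context padic
begin

abbreviation ts where "ts m s \<equiv> teich_sum \<O> pi red m s"
abbreviation tc where "tc t \<equiv> teich \<O> red t"

definition delta :: "nat \<Rightarrow> (nat \<Rightarrow> 'k) \<Rightarrow> (nat \<Rightarrow> 'k) \<Rightarrow> 'a" where
  "delta n s0 s = (ts n s - ts n s0) / pi ^ (n - 1)"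

lemma ts_split: "n \<ge> 1 \<Longrightarrow> ts n s = ts (n - 1) s + pi ^ (n - 1) * tc (s (n - 1))"
  using ts_Suc[of "n - 1" s] by (simp add: mult.commute)

lemma delta_eq: "ts n s = ts n s0 + pi ^ (n - 1) * delta n s0 s"
  unfolding delta_def by simp

lemma delta_O: assumes "n \<ge> 1" shows "delta n s0 s \<in> \<O> \<longleftrightarrow> (\<forall>j<n - 1. s j = s0 j)"
proof -
  define D' where "D' = ts (n - 1) s - ts (n - 1) s0"
  define E where "E = tc (s (n - 1)) - tc (s0 (n - 1))"
  have EO: "E \<in> \<O>" unfolding E_def by simp
  have dd: "delta n s0 s = D' / pi ^ (n - 1) + E"
    unfolding delta_def D'_def E_def using ts_split[OF assms, of s] ts_split[OF assms, of s0]
    by (simp add: field_simps)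
  have "delta n s0 s \<in> \<O> \<longleftrightarrow> D' / pi ^ (n - 1) \<in> \<O>"
  proof
    assume "delta n s0 s \<in> \<O>"
    hence "delta n s0 s - E \<in> \<O>" using EO by simp
    thus "D' / pi ^ (n - 1) \<in> \<O>" using dd by simp
  qed (use dd EO in simp)
  also have "\<dots> \<longleftrightarrow> dv (n - 1) D'" by (simp add: dv_div)
  also have "\<dots> \<longleftrightarrow> (\<forall>j<n - 1. s j = s0 j)"
  proof
    assume "dv (n - 1) D'" thus "\<forall>j<n - 1. s j = s0 j" unfolding D'_def by (rule ts_dv)
  next
    assume "\<forall>j<n - 1. s j = s0 j"
    hence "D' = 0" unfolding D'_def using ts_eq by simp
    thus "dv (n - 1) D'" by simp
  qed
  finally show ?thesis .
qed

lemma delta_val: assumes "n \<ge> 1" "\<forall>j<n - 1. s j = s0 j"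
  shows "delta n s0 s = tc (s (n - 1)) - tc (s0 (n - 1))"
proof -
  have "ts (n - 1) s = ts (n - 1) s0" using ts_eq assms(2) by blast
  thus ?thesis unfolding delta_def using ts_split[OF assms(1), of s] ts_split[OF assms(1), of s0]
    by (simp add: field_simps)
qed

lemma red_delta: assumes "n \<ge> 1" "\<forall>j<n - 1. s j = s0 j"
  shows "red (delta n s0 s) = s (n - 1) - s0 (n - 1)"
  using delta_val[OF assms] by simp

definition H1 where "H1 n s t = M2 (pi ^ n) (ts n s) 0 1 \<cdot> beta pi \<cdot> M2 1 (tc t) 0 1 \<cdot> wmat"
definition R1 where "R1 n s0 t0 s t = (let d = delta n s0 s in
   M2 (1 + tc t * d) d ((tc t - tc t0) - tc t * tc t0 * d) (1 - tc t0 * d))"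

lemma H1_form: "n \<ge> 1 \<Longrightarrow> H1 n s t = M2 (pi * pi ^ (n - 1) + ts n s * pi * tc t) (ts n s * pi) (pi * tc t) pi"
  unfolding H1_def beta_def wmat_def
  by (cases n) (simp_all add: algebra_simps)

lemma H1_R: assumes "n \<ge> 1" shows "H1 n s t = H1 n s0 t0 \<cdot> R1 n s0 t0 s t"
  unfolding H1_form[OF assms] R1_def Let_def delta_eq[of n s s0] by (rule alg1)

lemma R1_det: "det2 (R1 n s0 t0 s t) = 1"
  unfolding R1_def Let_def by (rule alg1_det)

lemma H1_det: "n \<ge> 1 \<Longrightarrow> det2 (H1 n s t) \<noteq> 0"
  unfolding H1_form by (simp add: algebra_simps)

lemma R1_Iwa: assumes "n \<ge> 1"
  shows "R1 n s0 t0 s t \<in> Iwa \<O> pi \<longleftrightarrow> (\<forall>j<n - 1. s j = s0 j) \<and> t * (1 - t0 * (s (n - 1) - s0 (n - 1))) = t0"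
    and "R1 n s0 t0 s t \<in> Iwa \<O> pi \<Longrightarrow> red (dent (R1 n s0 t0 s t)) = 1 - t0 * (s (n - 1) - s0 (n - 1))"
proof -
  define d where "d = delta n s0 s"
  have R: "R1 n s0 t0 s t = M2 (1 + tc t * d) d ((tc t - tc t0) - tc t * tc t0 * d) (1 - tc t0 * d)"
    unfolding R1_def d_def by (simp add: Let_def)
  have I: "R1 n s0 t0 s t \<in> Iwa \<O> pi \<longleftrightarrow> 1 + tc t * d \<in> \<O> \<and> d \<in> \<O> \<and> 1 - tc t0 * d \<in> \<O> \<and>
     (\<exists>y\<in>\<O>. (tc t - tc t0) - tc t * tc t0 * d = pi * y)"
    unfolding R by (rule Iwa_det1) (rule alg1_det)
  show "R1 n s0 t0 s t \<in> Iwa \<O> pi \<longleftrightarrow> (\<forall>j<n - 1. s j = s0 j) \<and> t * (1 - t0 * (s (n - 1) - s0 (n - 1))) = t0"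
  proof (cases "d \<in> \<O>")
    case True
    have ag: "\<forall>j<n - 1. s j = s0 j" using True delta_O[OF assms] d_def by simp
    have rd: "red d = s (n - 1) - s0 (n - 1)" using red_delta[OF assms ag] d_def by simp
    have XO: "(tc t - tc t0) - tc t * tc t0 * d \<in> \<O>" using True by simp
    have "(\<exists>y\<in>\<O>. (tc t - tc t0) - tc t * tc t0 * d = pi * y) \<longleftrightarrow> red ((tc t - tc t0) - tc t * tc t0 * d) = 0"
      using red_ker[OF XO] by simp
    also have "red ((tc t - tc t0) - tc t * tc t0 * d) = (t - t0) - t * t0 * (s (n - 1) - s0 (n - 1))"
      using True rd by simp
    finally show ?thesis unfolding I using True ag by (auto simp: algebra_simps)
  next
    case False
    hence "\<not> (\<forall>j<n - 1. s j = s0 j)" using delta_O[OF assms] d_def by simp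
    thus ?thesis unfolding I using False by blast
  qed
  assume "R1 n s0 t0 s t \<in> Iwa \<O> pi"
  hence True: "d \<in> \<O>" unfolding I by simp
  have ag: "\<forall>j<n - 1. s j = s0 j" using True delta_O[OF assms] d_def by simp
  have rd: "red d = s (n - 1) - s0 (n - 1)" using red_delta[OF assms ag] d_def by simp
  show "red (dent (R1 n s0 t0 s t)) = 1 - t0 * (s (n - 1) - s0 (n - 1))"
    unfolding R using True rd by simp
qed

definition H2 where "H2 n s t = M2 (pi ^ (n - 1)) (ts (n - 1) s) 0 1 \<cdot> M2 1 (tc (s (n - 1))) 0 1 \<cdot> wmat \<cdot> M2 pi (tc t) 0 1"
definition R2 where "R2 n s0 t0 s t = (let d = delta n s0 s in
   M2 (1 - tc t0 * d) ((tc t - tc t0 - tc t0 * tc t * d) / pi) (pi * d) (1 + tc t * d))"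

lemma H2_form: "n \<ge> 1 \<Longrightarrow> H2 n s t = M2 (pi * ts n s) (ts n s * tc t + pi ^ (n - 1)) pi (tc t)"
  unfolding H2_def wmat_def ts_split[of n s] by (simp add: algebra_simps)

lemma H2_R: assumes "n \<ge> 1" shows "H2 n s t = H2 n s0 t0 \<cdot> R2 n s0 t0 s t"
  unfolding H2_form[OF assms] R2_def Let_def delta_eq[of n s s0] by (rule alg2) simp

lemma R2_det: "det2 (R2 n s0 t0 s t) = 1"
  unfolding R2_def Let_def by (rule alg2_det) simp

lemma H2_det: "n \<ge> 1 \<Longrightarrow> det2 (H2 n s t) \<noteq> 0"
  unfolding H2_form by (simp add: algebra_simps)

lemma R2_Iwa: assumes "n \<ge> 1"
  shows "R2 n s0 t0 s t \<in> Iwa \<O> pi \<longleftrightarrow> (\<forall>j<n - 1. s j = s0 j) \<and> t * (1 - t0 * (s (n - 1) - s0 (n - 1))) = t0"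
    and "R2 n s0 t0 s t \<in> Iwa \<O> pi \<Longrightarrow> red (dent (R2 n s0 t0 s t)) = 1 + t * (s (n - 1) - s0 (n - 1))"
proof -
  define d where "d = delta n s0 s"
  define X where "X = tc t - tc t0 - tc t0 * tc t * d"
  have R: "R2 n s0 t0 s t = M2 (1 - tc t0 * d) (X / pi) (pi * d) (1 + tc t * d)"
    unfolding R2_def d_def X_def by (simp add: Let_def)
  have I0: "R2 n s0 t0 s t \<in> Iwa \<O> pi \<longleftrightarrow> 1 - tc t0 * d \<in> \<O> \<and> X / pi \<in> \<O> \<and> 1 + tc t * d \<in> \<O> \<and>
     (\<exists>y\<in>\<O>. pi * d = pi * y)"
    unfolding R by (rule Iwa_det1) (unfold X_def, rule alg2_det, simp)
  have dd: "(\<exists>y\<in>\<O>. pi * d = pi * y) \<longleftrightarrow> d \<in> \<O>" by simp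
  have I: "R2 n s0 t0 s t \<in> Iwa \<O> pi \<longleftrightarrow> d \<in> \<O> \<and> X / pi \<in> \<O>"
    unfolding I0 dd by auto
  show "R2 n s0 t0 s t \<in> Iwa \<O> pi \<longleftrightarrow> (\<forall>j<n - 1. s j = s0 j) \<and> t * (1 - t0 * (s (n - 1) - s0 (n - 1))) = t0"
  proof (cases "d \<in> \<O>")
    case True
    have ag: "\<forall>j<n - 1. s j = s0 j" using True delta_O[OF assms] d_def by simp
    have rd: "red d = s (n - 1) - s0 (n - 1)" using red_delta[OF assms ag] d_def by simp
    have XO: "X \<in> \<O>" unfolding X_def using True by simp
    have "X / pi \<in> \<O> \<longleftrightarrow> red X = 0" using dv_div[of 1 X] dv1_red[OF XO] by simp
    also have "red X = t - t0 - t0 * t * (s (n - 1) - s0 (n - 1))"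
      unfolding X_def using True rd by simp
    finally show ?thesis unfolding I using True ag by (auto simp: algebra_simps)
  next
    case False
    hence "\<not> (\<forall>j<n - 1. s j = s0 j)" using delta_O[OF assms] d_def by simp
    thus ?thesis unfolding I using False by blast
  qed
  assume "R2 n s0 t0 s t \<in> Iwa \<O> pi"
  hence True: "d \<in> \<O>" unfolding I by simp
  have ag: "\<forall>j<n - 1. s j = s0 j" using True delta_O[OF assms] d_def by simp
  have rd: "red d = s (n - 1) - s0 (n - 1)" using red_delta[OF assms ag] d_def by simp
  show "red (dent (R2 n s0 t0 s t)) = 1 + t * (s (n - 1) - s0 (n - 1))"
    unfolding R using True rd by simp
qed

end

lemma PiE_slice:
  fixes s0 :: "nat \<Rightarrow> 'k::finite"
  assumes n: "n \<ge> 1" and s0: "s0 \<in> PiE {..<n} (\<lambda>_. UNIV)"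
  shows "(\<Sum>s\<in>PiE {..<n} (\<lambda>_. UNIV). if (\<forall>j<n - 1. s j = s0 j) then F s else 0) = (\<Sum>m\<in>UNIV. F (s0(n - 1 := m)))"
proof -
  define S where "S = PiE {..<n} (\<lambda>_. UNIV :: 'k set)"
  have fin: "finite S" unfolding S_def by (rule finite_PiE) auto
  have "(\<Sum>s\<in>S. if (\<forall>j<n - 1. s j = s0 j) then F s else 0) = (\<Sum>s\<in>{s\<in>S. \<forall>j<n - 1. s j = s0 j}. F s)"
    by (simp add: sum.inter_filter[OF fin])
  also have "{s\<in>S. \<forall>j<n - 1. s j = s0 j} = (\<lambda>m. s0(n - 1 := m)) ` UNIV"
  proof
    show "{s\<in>S. \<forall>j<n - 1. s j = s0 j} \<subseteq> (\<lambda>m. s0(n - 1 := m)) ` UNIV"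
    proof
      fix s assume s: "s \<in> {s\<in>S. \<forall>j<n - 1. s j = s0 j}"
      have "s = s0(n - 1 := s (n - 1))"
      proof
        fix j
        show "s j = (s0(n - 1 := s (n - 1))) j"
        proof (cases "j < n - 1")
          case True thus ?thesis using s by auto
        next
          case False
          show ?thesis
          proof (cases "j = n - 1")
            case False
            hence "j \<notin> {..<n}" using \<open>\<not> j < n - 1\<close> by auto
            hence "s j = undefined" "s0 j = undefined" using s s0 unfolding S_def by (auto intro: PiE_arb)
            thus ?thesis using False by simp
          qed simp
        qed
      qed
      thus "s \<in> (\<lambda>m. s0(n - 1 := m)) ` UNIV" by blast
    qed
  next
    show "(\<lambda>m. s0(n - 1 := m)) ` UNIV \<subseteq> {s\<in>S. \<forall>j<n - 1. s j = s0 j}"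
    proof
      fix s assume "s \<in> (\<lambda>m. s0(n - 1 := m)) ` UNIV"
      then obtain m where m: "s = s0(n - 1 := m)" by blast
      have "insert (n - 1) {..<n} = {..<n}" using n by auto
      hence "s \<in> S" unfolding S_def m using PiE_fun_upd[of m "\<lambda>_. UNIV" "n - 1" s0 "{..<n}"] s0 by simp
      thus "s \<in> {s\<in>S. \<forall>j<n - 1. s j = s0 j}" using m by auto
    qed
  qed
  also have "(\<Sum>s\<in>(\<lambda>m. s0(n - 1 := m)) ` UNIV. F s) = (\<Sum>m\<in>UNIV. F (s0(n - 1 := m)))"
  proof (rule sum.reindex[unfolded comp_def])
    show "inj_on (\<lambda>m. s0(n - 1 := m)) UNIV" by (rule inj_onI) (metis fun_upd_same)
  qed
  finally show ?thesis unfolding S_def .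
qed

lemma prod_upd:
  fixes s0 :: "nat \<Rightarrow> 'k::comm_ring_1"
  assumes "n \<ge> 1"
  shows "(\<Prod>j<n. (s0(n - 1 := m)) j ^ i j) = (\<Prod>j<n - 1. s0 j ^ i j) * m ^ i (n - 1)"
proof -
  have "{..<n} = insert (n - 1) {..<n - 1}" using assms by auto
  hence "(\<Prod>j<n. (s0(n - 1 := m)) j ^ i j) = m ^ i (n - 1) * (\<Prod>j<n - 1. (s0(n - 1 := m)) j ^ i j)"
    by simp
  also have "(\<Prod>j<n - 1. (s0(n - 1 := m)) j ^ i j) = (\<Prod>j<n - 1. s0 j ^ i j)"
    by (intro prod.cong) auto
  finally show ?thesis by (simp add: mult.commute)
qed

lemma ifmul: "x = (if b then g else 0) \<Longrightarrow> (c::'a::mult_zero) * x = (if b then c * g else 0)"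
  by simp

lemma sum_reduce:
  fixes Q :: "(nat \<Rightarrow> 'k::{field,finite}) \<Rightarrow> 'k \<Rightarrow> bool"
  assumes n: "n \<ge> 1" and s0: "s0 \<in> PiE {..<n} (\<lambda>_. UNIV)"
    and Qc: "\<And>s t. s \<in> PiE {..<n} (\<lambda>_. UNIV) \<Longrightarrow> Q s t \<longleftrightarrow> (\<forall>j<n - 1. s j = s0 j) \<and> t * (1 - t0 * (s (n - 1) - s0 (n - 1))) = t0"
    and V: "\<And>s t. s \<in> PiE {..<n} (\<lambda>_. UNIV) \<Longrightarrow> Q s t \<Longrightarrow> val s t = W (s (n - 1) - s0 (n - 1)) t"
  shows "(\<Sum>s\<in>PiE {..<n} (\<lambda>_. UNIV). (\<Prod>j<n. s j ^ i j) * (\<Sum>t\<in>UNIV. if Q s t then val s t else 0)) =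
    (\<Prod>j<n - 1. s0 j ^ i j) * (\<Sum>m\<in>UNIV. m ^ i (n - 1) *
       (\<Sum>t\<in>UNIV. if t * (1 - t0 * (m - s0 (n - 1))) = t0 then W (m - s0 (n - 1)) t else 0))"
proof -
  define G where "G m = (\<Sum>t\<in>UNIV. if t * (1 - t0 * (m - s0 (n - 1))) = t0 then W (m - s0 (n - 1)) t else 0)" for m
  have "(\<Sum>s\<in>PiE {..<n} (\<lambda>_. UNIV). (\<Prod>j<n. s j ^ i j) * (\<Sum>t\<in>UNIV. if Q s t then val s t else 0)) =
     (\<Sum>s\<in>PiE {..<n} (\<lambda>_. UNIV). if (\<forall>j<n - 1. s j = s0 j) then (\<Prod>j<n. s j ^ i j) * G (s (n - 1)) else 0)"
  proof (intro sum.cong refl)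
    fix s assume s: "s \<in> PiE {..<n} (\<lambda>_. UNIV :: 'k set)"
    have "(\<Sum>t\<in>UNIV. if Q s t then val s t else 0) =
        (if (\<forall>j<n - 1. s j = s0 j) then G (s (n - 1)) else 0)"
    proof (cases "\<forall>j<n - 1. s j = s0 j")
      case True
      thus ?thesis unfolding G_def using Qc[OF s] V[OF s] by (auto intro!: sum.cong)
    next
      case False
      hence "\<forall>t. \<not> Q s t" using Qc[OF s] by blast
      thus ?thesis using False by (simp only: if_False if_True simp_thms sum.neutral_const)
    qed
    thus "(\<Prod>j<n. s j ^ i j) * (\<Sum>t\<in>UNIV. if Q s t then val s t else 0) =
       (if (\<forall>j<n - 1. s j = s0 j) then (\<Prod>j<n. s j ^ i j) * G (s (n - 1)) else 0)" by (rule ifmul)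
  qed
  also have "\<dots> = (\<Sum>m\<in>UNIV. (\<Prod>j<n. (s0(n - 1 := m)) j ^ i j) * G m)"
    using PiE_slice[OF n s0, of "\<lambda>s. (\<Prod>j<n. s j ^ i j) * G (s (n - 1))"] by simp
  also have "\<dots> = (\<Sum>m\<in>UNIV. (\<Prod>j<n - 1. s0 j ^ i j) * (m ^ i (n - 1) * G m))"
    by (intro sum.cong refl) (simp only: prod_upd[OF n] mult.assoc)
  finally show ?thesis unfolding G_def by (simp add: sum_distrib_left)
qed

lemma Gsum:
  fixes d t0 :: "'k::{field,finite}"
  assumes "d = 0 \<Longrightarrow> t0 \<noteq> 0"
  shows "(\<Sum>t\<in>UNIV. if t * d = t0 then W t else 0) = (if d = 0 then 0 else W (t0 / d))"
proof (cases "d = 0")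
  case True thus ?thesis using assms by simp
next
  case False
  have "(\<Sum>t\<in>UNIV. if t * d = t0 then W t else 0) = (\<Sum>t\<in>UNIV. if t = t0 / d then W t else 0)"
    using False by (intro sum.cong refl) (auto simp: field_simps)
  also have "\<dots> = W (t0 / d)" by simp
  finally show ?thesis using False by simp
qed

lemma G1:
  fixes t0 e :: "'k::{field,finite}"
  assumes "0 < r"
  shows "(\<Sum>t\<in>UNIV. if t * (1 - t0 * e) = t0 then (1 - t0 * e) ^ r else 0) = (1 - t0 * e) ^ r"
proof -
  have "1 - t0 * e = 0 \<Longrightarrow> t0 \<noteq> 0" by auto
  thus ?thesis using Gsum[of "1 - t0 * e" t0 "\<lambda>_. (1 - t0 * e) ^ r"] assms by (simp add: zero_power)
qed

lemma G2:
  fixes t0 e :: "'k::{field,finite}"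
  assumes "0 < r"
  shows "(\<Sum>t\<in>UNIV. if t * (1 - t0 * e) = t0 then (1 + t * e) ^ r else 0) = inverse (1 - t0 * e) ^ r"
proof -
  have "1 - t0 * e = 0 \<Longrightarrow> t0 \<noteq> 0" by auto
  hence G: "(\<Sum>t\<in>UNIV. if t * (1 - t0 * e) = t0 then (1 + t * e) ^ r else 0) =
     (if 1 - t0 * e = 0 then 0 else (1 + t0 / (1 - t0 * e) * e) ^ r)"
    by (rule Gsum)
  show ?thesis
  proof (cases "1 - t0 * e = 0")
    case True thus ?thesis using G assms by (simp add: zero_power)
  next
    case False
    have "1 + t0 / (1 - t0 * e) * e = inverse (1 - t0 * e)" using False by (simp add: field_simps)
    thus ?thesis using G False by simp
  qed
qed

lemma inverse_pow_card:
  fixes x :: "'k::{field,finite}"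
  assumes "0 < r" "r < CARD('k) - 1"
  shows "inverse x ^ r = x ^ (CARD('k) - 1 - r)"
proof (cases "x = 0")
  case True thus ?thesis using assms by (simp add: zero_power)
next
  case False
  have "x ^ (CARD('k) - 1 - r) * x ^ r = x ^ (CARD('k) - 1)" using assms by (simp flip: power_add)
  also have "\<dots> = 1" using False by (rule ff_pow_card1)
  finally show ?thesis using False by (simp add: field_simps power_inverse)
qed



context padic
begin

lemma chi_I: "chi \<O> pi red r (M2 1 0 0 1) = 1"
  using chi_eval[OF I_Iwa, of r 0] by simp

lemma I_IZ: "M2 1 0 0 1 \<in> IZ \<O> pi"
  using IZ_intro[OF I_Iwa, of 0] by simp

lemma kernel_generic:
  fixes H :: "(nat \<Rightarrow> 'k) \<Rightarrow> 'k \<Rightarrow> 'a mat2" and R :: "(nat \<Rightarrow> 'k) \<Rightarrow> 'k \<Rightarrow> (nat \<Rightarrow> 'k) \<Rightarrow> 'k \<Rightarrow> 'a mat2"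
  assumes n: "n \<ge> 1"
    and HR: "\<And>s0 t0 s t. H s t = H s0 t0 \<cdot> R s0 t0 s t"
    and dR: "\<And>s0 t0 s t. det2 (R s0 t0 s t) = 1"
    and dH: "\<And>s t. det2 (H s t) \<noteq> 0"
    and RI: "\<And>s0 t0 s t. R s0 t0 s t \<in> Iwa \<O> pi \<longleftrightarrow> (\<forall>j<n - 1. s j = s0 j) \<and> t * (1 - t0 * (s (n - 1) - s0 (n - 1))) = t0"
    and RV: "\<And>s0 t0 s t. R s0 t0 s t \<in> Iwa \<O> pi \<Longrightarrow> red (dent (R s0 t0 s t)) ^ r = W t0 (s (n - 1) - s0 (n - 1)) t"
    and GW: "\<And>t0 e. (\<Sum>t\<in>UNIV. if t * (1 - t0 * e) = t0 then W t0 e t else 0) = V t0 e"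
  shows "(\<lambda>x. \<Sum>s\<in>PiE {..<n} (\<lambda>_. UNIV). (\<Prod>j<n. s j ^ i j) * (\<Sum>t\<in>UNIV. bracket \<O> pi red r (H s t) x)) = (\<lambda>_. 0)
     \<longleftrightarrow> (\<forall>m0 t0. (\<Sum>m\<in>UNIV. m ^ i (n - 1) * V t0 (m - m0)) = 0)"
proof -
  define S where "S = PiE {..<n} (\<lambda>_. UNIV :: 'k set)"
  have key: "(\<Sum>s\<in>S. (\<Prod>j<n. s j ^ i j) * (\<Sum>t\<in>UNIV. bracket \<O> pi red r (H s t) x)) =
      chi \<O> pi red r (x \<cdot> H s0 t0) * ((\<Prod>j<n - 1. s0 j ^ i j) * (\<Sum>m\<in>UNIV. m ^ i (n - 1) * V t0 (m - s0 (n - 1))))"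
    if s0: "s0 \<in> S" and hit: "x \<cdot> H s0 t0 \<in> IZ \<O> pi" for x s0 t0
  proof -
    have "(\<Sum>s\<in>S. (\<Prod>j<n. s j ^ i j) * (\<Sum>t\<in>UNIV. bracket \<O> pi red r (H s t) x)) =
      chi \<O> pi red r (x \<cdot> H s0 t0) * (\<Sum>s\<in>S. (\<Prod>j<n. s j ^ i j) *
         (\<Sum>t\<in>UNIV. if R s0 t0 s t \<in> Iwa \<O> pi then red (dent (R s0 t0 s t)) ^ r else 0))"
      by (rule Tsum[OF hit HR dR])
    also have "(\<Sum>s\<in>S. (\<Prod>j<n. s j ^ i j) *
         (\<Sum>t\<in>UNIV. if R s0 t0 s t \<in> Iwa \<O> pi then red (dent (R s0 t0 s t)) ^ r else 0)) =
       (\<Prod>j<n - 1. s0 j ^ i j) * (\<Sum>m\<in>UNIV. m ^ i (n - 1) *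
       (\<Sum>t\<in>UNIV. if t * (1 - t0 * (m - s0 (n - 1))) = t0 then W t0 (m - s0 (n - 1)) t else 0))"
      unfolding S_def by (rule sum_reduce[OF n s0[unfolded S_def]]) (use RI RV in auto)
    finally show ?thesis by (simp only: GW)
  qed
  show ?thesis
  proof
    assume Z: "(\<lambda>x. \<Sum>s\<in>PiE {..<n} (\<lambda>_. UNIV). (\<Prod>j<n. s j ^ i j) * (\<Sum>t\<in>UNIV. bracket \<O> pi red r (H s t) x)) = (\<lambda>_. 0)"
    show "\<forall>m0 t0. (\<Sum>m\<in>UNIV. m ^ i (n - 1) * V t0 (m - m0)) = 0"
    proof (intro allI)
      fix m0 t0 :: 'k
      define s0 where "s0 = (\<lambda>j. if j < n then (if j = n - 1 then m0 else 1) else undefined)"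
      have s0S: "s0 \<in> S" unfolding S_def s0_def by (auto simp: PiE_iff extensional_def)
      define x where "x = minv (H s0 t0)"
      have xh: "x \<cdot> H s0 t0 = M2 1 0 0 1" unfolding x_def by (rule minv_left[OF dH])
      have z: "(\<Sum>s\<in>S. (\<Prod>j<n. s j ^ i j) * (\<Sum>t\<in>UNIV. bracket \<O> pi red r (H s t) x)) = 0"
        using fun_cong[OF Z, of x] unfolding S_def by simp
      have p1: "(\<Prod>j<n - 1. s0 j ^ i j) = 1" unfolding s0_def using n by (intro prod.neutral) auto
      have m0: "s0 (n - 1) = m0" unfolding s0_def using n by simp
      have hit: "x \<cdot> H s0 t0 \<in> IZ \<O> pi" unfolding xh by (rule I_IZ)
      have "(\<Sum>s\<in>S. (\<Prod>j<n. s j ^ i j) * (\<Sum>t\<in>UNIV. bracket \<O> pi red r (H s t) x)) =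
          chi \<O> pi red r (x \<cdot> H s0 t0) * ((\<Prod>j<n - 1. s0 j ^ i j) * (\<Sum>m\<in>UNIV. m ^ i (n - 1) * V t0 (m - s0 (n - 1))))"
        by (rule key[OF s0S hit])
      also have "\<dots> = (\<Sum>m\<in>UNIV. m ^ i (n - 1) * V t0 (m - m0))"
        unfolding xh chi_I p1 m0 by simp
      finally show "(\<Sum>m\<in>UNIV. m ^ i (n - 1) * V t0 (m - m0)) = 0" using z by simp
    qed
  next
    assume A: "\<forall>m0 t0. (\<Sum>m\<in>UNIV. m ^ i (n - 1) * V t0 (m - m0)) = 0"
    show "(\<lambda>x. \<Sum>s\<in>PiE {..<n} (\<lambda>_. UNIV). (\<Prod>j<n. s j ^ i j) * (\<Sum>t\<in>UNIV. bracket \<O> pi red r (H s t) x)) = (\<lambda>_. 0)"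
    proof
      fix x
      show "(\<Sum>s\<in>PiE {..<n} (\<lambda>_. UNIV). (\<Prod>j<n. s j ^ i j) * (\<Sum>t\<in>UNIV. bracket \<O> pi red r (H s t) x)) = 0"
      proof (cases "\<exists>s0\<in>S. \<exists>t0. x \<cdot> H s0 t0 \<in> IZ \<O> pi")
        case True
        then obtain s0 t0 where "s0 \<in> S" "x \<cdot> H s0 t0 \<in> IZ \<O> pi" by blast
        thus ?thesis using key A unfolding S_def by simp
      next
        case False
        thus ?thesis unfolding S_def by (rule Tsum_zero)
      qed
    qed
  qed
qed

lemma kernel1:
  assumes r: "0 < r" and n: "n \<ge> 1"
  shows "T12_comb \<O> pi red r (PiE {..<n} (\<lambda>_. UNIV)) (\<lambda>mu. \<Prod>j<n. mu j ^ i j)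
        (\<lambda>mu. M2 (pi ^ n) (teich_sum \<O> pi red n mu) 0 1) = (\<lambda>_. 0)
     \<longleftrightarrow> (\<forall>m0 t0::'k. (\<Sum>m\<in>UNIV. m ^ i (n - 1) * (1 - t0 * (m - m0)) ^ r) = 0)"
proof -
  have T: "T12_comb \<O> pi red r (PiE {..<n} (\<lambda>_. UNIV)) (\<lambda>mu. \<Prod>j<n. mu j ^ i j)
        (\<lambda>mu. M2 (pi ^ n) (teich_sum \<O> pi red n mu) 0 1) =
     (\<lambda>x. \<Sum>s\<in>PiE {..<n} (\<lambda>_. UNIV). (\<Prod>j<n. s j ^ i j) * (\<Sum>t\<in>UNIV. bracket \<O> pi red r (H1 n s t) x))"
    unfolding T12_comb_def H1_def by simp
  show ?thesis unfolding T
  proof (rule kernel_generic[where W = "\<lambda>t0 e t. (1 - t0 * e) ^ r" and V = "\<lambda>t0 e. (1 - t0 * e) ^ r" and H = "H1 n" and R = "R1 n" and i = i and n = n])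
    show "n \<ge> 1" by (rule n)
    show "\<And>s0 t0 s t. H1 n s t = H1 n s0 t0 \<cdot> R1 n s0 t0 s t" by (rule H1_R[OF n])
    show "\<And>s0 t0 s t. det2 (R1 n s0 t0 s t) = 1" by (rule R1_det)
    show "\<And>s t. det2 (H1 n s t) \<noteq> 0" by (rule H1_det[OF n])
    show "\<And>s0 t0 s t. R1 n s0 t0 s t \<in> Iwa \<O> pi \<longleftrightarrow> (\<forall>j<n - 1. s j = s0 j) \<and> t * (1 - t0 * (s (n - 1) - s0 (n - 1))) = t0"
      by (rule R1_Iwa(1)[OF n])
    show "\<And>s0 t0 s t. R1 n s0 t0 s t \<in> Iwa \<O> pi \<Longrightarrow> red (dent (R1 n s0 t0 s t)) ^ r = (1 - t0 * (s (n - 1) - s0 (n - 1))) ^ r"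
      using R1_Iwa(2)[OF n] by simp
    show "\<And>t0 e::'k. (\<Sum>t\<in>UNIV. if t * (1 - t0 * e) = t0 then (1 - t0 * e) ^ r else 0) = (1 - t0 * e) ^ r"
      by (rule G1[OF r])
  qed
qed

lemma kernel2:
  assumes r: "0 < r" and n: "n \<ge> 1"
  shows "Tm10_comb \<O> pi red r (PiE {..<n} (\<lambda>_. UNIV)) (\<lambda>mu. \<Prod>j<n. mu j ^ i j)
        (\<lambda>mu. M2 (pi ^ (n - 1)) (teich_sum \<O> pi red (n - 1) mu) 0 1
              \<cdot> M2 1 (teich \<O> red (mu (n - 1))) 0 1 \<cdot> wmat) = (\<lambda>_. 0)
     \<longleftrightarrow> (\<forall>m0 t0::'k. (\<Sum>m\<in>UNIV. m ^ i (n - 1) * inverse (1 - t0 * (m - m0)) ^ r) = 0)"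
proof -
  have T: "Tm10_comb \<O> pi red r (PiE {..<n} (\<lambda>_. UNIV)) (\<lambda>mu. \<Prod>j<n. mu j ^ i j)
        (\<lambda>mu. M2 (pi ^ (n - 1)) (teich_sum \<O> pi red (n - 1) mu) 0 1
              \<cdot> M2 1 (teich \<O> red (mu (n - 1))) 0 1 \<cdot> wmat) =
     (\<lambda>x. \<Sum>s\<in>PiE {..<n} (\<lambda>_. UNIV). (\<Prod>j<n. s j ^ i j) * (\<Sum>t\<in>UNIV. bracket \<O> pi red r (H2 n s t) x))"
    unfolding Tm10_comb_def H2_def by simp
  show ?thesis unfolding T
  proof (rule kernel_generic[where W = "\<lambda>t0 e t. (1 + t * e) ^ r" and V = "\<lambda>t0 e. inverse (1 - t0 * e) ^ r" and H = "H2 n" and R = "R2 n" and i = i and n = n])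
    show "n \<ge> 1" by (rule n)
    show "\<And>s0 t0 s t. H2 n s t = H2 n s0 t0 \<cdot> R2 n s0 t0 s t" by (rule H2_R[OF n])
    show "\<And>s0 t0 s t. det2 (R2 n s0 t0 s t) = 1" by (rule R2_det)
    show "\<And>s t. det2 (H2 n s t) \<noteq> 0" by (rule H2_det[OF n])
    show "\<And>s0 t0 s t. R2 n s0 t0 s t \<in> Iwa \<O> pi \<longleftrightarrow> (\<forall>j<n - 1. s j = s0 j) \<and> t * (1 - t0 * (s (n - 1) - s0 (n - 1))) = t0"
      by (rule R2_Iwa(1)[OF n])
    show "\<And>s0 t0 s t. R2 n s0 t0 s t \<in> Iwa \<O> pi \<Longrightarrow> red (dent (R2 n s0 t0 s t)) ^ r = (1 + t * (s (n - 1) - s0 (n - 1))) ^ r"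
      using R2_Iwa(2)[OF n] by simp
    show "\<And>t0 e::'k. (\<Sum>t\<in>UNIV. if t * (1 - t0 * e) = t0 then (1 + t * e) ^ r else 0) = inverse (1 - t0 * e) ^ r"
      by (rule G2[OF r])
  qed
qed

end

theorem lemma3p6:
  fixes \<O> :: "'a::field_char_0 set" and pi :: 'a and red :: "'a \<Rightarrow> 'k::{field,finite}"
    and p f r n :: nat and i :: "nat \<Rightarrow> nat"
  assumes F: "padic_setup \<O> pi red p f"
    and r: "0 < r" "r < CARD('k) - 1"
    and n: "n \<ge> 1"
    and i: "\<forall>j<n. i j \<le> CARD('k) - 1"
  shows
    "(T12_comb \<O> pi red r (PiE {..<n} (\<lambda>_. UNIV))
        (\<lambda>mu. \<Prod>j<n. mu j ^ i j)
        (\<lambda>mu. M2 (pi ^ n) (teich_sum \<O> pi red n mu) 0 1) = (\<lambda>_. 0)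
      \<longleftrightarrow> (i (n - 1) \<le> CARD('k) - 2 - r \<or>
           (i (n - 1) > CARD('k) - 1 - r \<and>
            (\<exists>j. j + 1 < f \<and> digit p (i (n - 1)) j < p - 1 - digit p r j))))
   \<and>
    (Tm10_comb \<O> pi red r (PiE {..<n} (\<lambda>_. UNIV))
        (\<lambda>mu. \<Prod>j<n. mu j ^ i j)
        (\<lambda>mu. M2 (pi ^ (n - 1)) (teich_sum \<O> pi red (n - 1) mu) 0 1
              \<cdot> M2 1 (teich \<O> red (mu (n - 1))) 0 1 \<cdot> wmat) = (\<lambda>_. 0)
      \<longleftrightarrow> (i (n - 1) \<le> r - 1 \<or>
           (i (n - 1) > r \<and> (\<exists>j. j + 1 < f \<and> digit p (i (n - 1)) j < digit p r j))))"
proof -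
  interpret P: padic \<O> pi red p f by (rule padic.intro[OF F])
  have iq: "i (n - 1) \<le> CARD('k) - 1" using i n by simp
  have card: "CARD('k) = p ^ f" by (rule P.card_k)
  have pr: "prime p" by (rule P.prime_p)
  have f1: "f \<ge> 1" by (rule P.f1)
  have part1: "(\<forall>m0 t0::'k. (\<Sum>m\<in>UNIV. m ^ i (n - 1) * (1 - t0 * (m - m0)) ^ r) = 0) \<longleftrightarrow>
     (i (n - 1) \<le> CARD('k) - 2 - r \<or>
           (i (n - 1) > CARD('k) - 1 - r \<and>
            (\<exists>j. j + 1 < f \<and> digit p (i (n - 1)) j < p - 1 - digit p r j)))"
    using kcond[OF card pr f1 r iq] trans1[OF card pr f1 card r iq] by simp
  have inv: "(\<Sum>m\<in>UNIV. m ^ i (n - 1) * inverse (1 - t0 * (m - m0)) ^ r) =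
     (\<Sum>m\<in>UNIV. m ^ i (n - 1) * (1 - t0 * (m - m0)) ^ (CARD('k) - 1 - r))" for m0 t0 :: 'k
    using inverse_pow_card[OF r] by simp
  have r2: "0 < CARD('k) - 1 - r" "CARD('k) - 1 - r < CARD('k) - 1" using r by auto
  have part2: "(\<forall>m0 t0::'k. (\<Sum>m\<in>UNIV. m ^ i (n - 1) * inverse (1 - t0 * (m - m0)) ^ r) = 0) \<longleftrightarrow>
     (i (n - 1) \<le> r - 1 \<or> (i (n - 1) > r \<and> (\<exists>j. j + 1 < f \<and> digit p (i (n - 1)) j < digit p r j)))"
    unfolding inv using kcond[OF card pr f1 r2 iq] trans2[OF card pr f1 card r iq] by simp
  show ?thesis
    by (intro conjI trans[OF P.kernel1[OF r(1) n, where i=i] part1] trans[OF P.kernel2[OF r(1) n, where i=i] part2])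
qed

end
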